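(* Let $\mathcal{X}_1,\mathcal{X}_2$ be non-empty sets, let $\mathcal{B}_1\subseteq\mathcal{P}(\mathcal{X}_1)\setminus\{\emptyset\}$ and $\mathcal{B}_2\subseteq\mathcal{P}(\mathcal{X}_2)\setminus\{\emptyset\}$, and for $i\in\{1,2\}$ let $\underline{P}_i$ be a coherent conditional lower prevision on a domain $\mathcal{C}_i\subseteq\mathcal{C}(\mathcal{X}_i)$. Let $\mathcal{C}\subseteq\mathcal{C}(\mathcal{X}_1\times\mathcal{X}_2)$ be an independent domain that contains $\mathcal{C}_1$ and $\mathcal{C}_2$. Then the independent natural extension of $\underline{P}_1$ and $\underline{P}_2$ (on $\mathcal{C}$) exists and equals the restriction to $\mathcal{C}$ of $\underline{P}_1\otimes\underline{P}_2$, where $(\underline{P}_1\otimes\underline{P}_2)(f\vert B):=\underline{P}_{\mathcal{D}}(f\vert B)$ for all $(f,B)\in\mathcal{C}(\mathcal{X}_1\times\mathcal{X}_2)$, with $\mathcal{D}:=\mathcal{E}(\underline{P}_1)\otimes\mathcal{E}(\underline{P}_2)$.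
   Context: Gambles on a non-empty set $\mathcal{X}$ are bounded real functions; $\mathcal{G}(\mathcal{X})$ is the set of gambles, $\mathcal{G}_{>0}(\mathcal{X})$ the non-negative non-zero gambles, $\mathbb{I}_A$ the indicator of $A$. For $\mathcal{A}\subseteq\mathcal{G}(\mathcal{X})$: $\mathrm{posi}(\mathcal{A}):=\{\sum_{i=1}^n\lambda_if_i\colon n\in\mathbb{N},\lambda_i>0,f_i\in\mathcal{A}\}$, $\mathcal{E}(\mathcal{A}):=\mathrm{posi}(\mathcal{A}\cup\mathcal{G}_{>0}(\mathcal{X}))$. A coherent set of desirable gambles $\mathcal{D}\subseteq\mathcal{G}(\mathcal{X})$ satisfies: (D1) $f\geq0,f\neq0\Rightarrow f\in\mathcal{D}$; (D2) $f\in\mathcal{D},\lambda>0\Rightarrow\lambda f\in\mathcal{D}$; (D3) $f,g\in\mathcal{D}\Rightarrow f+g\in\mathcal{D}$; (D4) $f\leq0\Rightarrow f\notin\mathcal{D}$. $\mathcal{C}(\mathcal{X}):=\mathcal{G}(\mathcal{X})\times(\mathcal{P}(\mathcal{X})\setminus\{\emptyset\})$. A conditional lower prevision on $\mathcal{C}\subseteq\mathcal{C}(\mathcal{X})$ is a map $\underline{P}\colon\mathcal{C}\to\mathbb{R}\cup\{\pm\infty\}$, $(f,B)\mapsto\underline{P}(f\vert B)$. For $\mathcal{D}\subseteq\mathcal{G}(\mathcal{X})$, $\underline{P}_{\mathcal{D}}(f\vert B):=\sup\{\mu\in\mathbb{R}\colon[f-\mu]\mathbb{I}_B\in\mathcal{D}\}$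 for $(f,B)\in\mathcal{C}(\mathcal{X})$. $\underline{P}$ on $\mathcal{C}$ is coherent if there is a coherent set of desirable gambles $\mathcal{D}$ with $\underline{P}=\underline{P}_{\mathcal{D}}$ on $\mathcal{C}$. For coherent $\underline{P}$ on $\mathcal{C}$, $\mathcal{A}_{\underline{P}}:=\{[f-\mu]\mathbb{I}_B\colon(f,B)\in\mathcal{C},\mu<\underline{P}(f\vert B)\}$ and $\mathcal{E}(\underline{P}):=\mathcal{E}(\mathcal{A}_{\underline{P}})$. Two-variable setting: gambles/events on $\mathcal{X}_i$ are identified with their cylindrical extensions to $\mathcal{X}_1\times\mathcal{X}_2$ (e.g. $B\subseteq\mathcal{X}_1$ with $B\times\mathcal{X}_2$, $f\in\mathcal{G}(\mathcal{X}_1)$ with $f(X_1)(x_1,x_2)=f(x_1)$). For coherent sets of desirable gambles $\mathcal{D}_1,\mathcal{D}_2$ on $\mathcal{X}_1,\mathcal{X}_2$: $\mathcal{D}_1\otimes\mathcal{D}_2:=\mathcal{E}(\mathcal{A}_{1\to2}\cup\mathcal{A}_{2\to1})$ with $\mathcal{A}_{1\to2}:=\{f_2(X_2)\mathbb{I}_{B_1}(X_1)\colon f_2\in\mathcal{D}_2,B_1\in\mathcal{B}_1\cup\{\mathcal{X}_1\}\}$, $\mathcal{A}_{2\to1}:=\{f_1(X_1)\mathbb{I}_{B_2}(X_2)\colon f_1\in\mathcal{D}_1,B_2\in\mathcal{B}_2\cup\{\mathcal{X}_2\}\}$. A domain $\mathcal{C}\subseteq\mathcal{C}(\mathcal{X}_1\times\mathcal{X}_2)$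 is independent if for all $\{i,j\}=\{1,2\}$, all $(f_i,B_i)\in\mathcal{C}(\mathcal{X}_i)$ and all $B_j\in\mathcal{B}_j$: $(f_i,B_i)\in\mathcal{C}\iff(f_i,B_i\cap B_j)\in\mathcal{C}$. A coherent conditional lower prevision $\underline{P}$ on an independent domain $\mathcal{C}$ is epistemically independent if $\underline{P}(f_i\vert B_i)=\underline{P}(f_i\vert B_i\cap B_j)$ for all $\{i,j\}=\{1,2\}$, $(f_i,B_i)\in\mathcal{C}$ (with $f_i,B_i$ on $\mathcal{X}_i$) and $B_j\in\mathcal{B}_j$. An independent product of $\underline{P}_1,\underline{P}_2$ is an epistemically independent coherent conditional lower prevision $\underline{P}$ on $\mathcal{C}$ with $\underline{P}(f_i\vert B_i)=\underline{P}_i(f_i\vert B_i)$ for all $i$ and $(f_i,B_i)\in\mathcal{C}_i$; the independent natural extension is the pointwise smallest independent product. *)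

theory Defs
  imports "HOL-Library.Extended_Real" "HOL-Library.Indicator_Function"
begin

text \<open>Possibility spaces are modelled by (non-empty) types; gambles are bounded
real-valued functions on the type.\<close>

definition gamble :: "('a \<Rightarrow> real) \<Rightarrow> bool" where
  "gamble f \<longleftrightarrow> (\<exists>M. \<forall>x. \<bar>f x\<bar> \<le> M)"

definition gambles :: "('a \<Rightarrow> real) set" where
  "gambles = {f. gamble f}"

definition gambles_pos :: "('a \<Rightarrow> real) set" where
  "gambles_pos = {f. gamble f \<and> (\<forall>x. 0 \<le> f x) \<and> f \<noteq> (\<lambda>x. 0)}"

definition posi :: "('a \<Rightarrow> real) set \<Rightarrow> ('a \<Rightarrow> real) set" where
  "posi A = {g. \<exists>(n::nat) (lam::nat \<Rightarrow> real) (f::nat \<Rightarrow> 'a \<Rightarrow> real).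
       1 \<le> n \<and> (\<forall>i<n. 0 < lam i \<and> f i \<in> A) \<and> g = (\<lambda>x. \<Sum>i<n. lam i * f i x)}"

definition natext :: "('a \<Rightarrow> real) set \<Rightarrow> ('a \<Rightarrow> real) set" where
  "natext A = posi (A \<union> gambles_pos)"

definition coherent_D :: "('a \<Rightarrow> real) set \<Rightarrow> bool" where
  "coherent_D D \<longleftrightarrow> D \<subseteq> gambles
     \<and> (\<forall>f. gamble f \<and> (\<forall>x. 0 \<le> f x) \<and> f \<noteq> (\<lambda>x. 0) \<longrightarrow> f \<in> D)
     \<and> (\<forall>f \<in> D. \<forall>lam::real. 0 < lam \<longrightarrow> (\<lambda>x. lam * f x) \<in> D)
     \<and> (\<forall>f \<in> D. \<forall>g \<in> D. (\<lambda>x. f x + g x) \<in> D)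
     \<and> (\<forall>f. (\<forall>x. f x \<le> 0) \<longrightarrow> f \<notin> D)"

definition cond_pairs :: "(('a \<Rightarrow> real) \<times> 'a set) set" where
  "cond_pairs = gambles \<times> (Pow UNIV - {{}})"

text \<open>Lower prevision induced by a set of desirable gambles (sup over the empty set is -\<infinity>).\<close>
definition lowprev_D :: "('a \<Rightarrow> real) set \<Rightarrow> ('a \<Rightarrow> real) \<Rightarrow> 'a set \<Rightarrow> ereal" where
  "lowprev_D D f B = Sup {ereal mu | mu. (\<lambda>x. (f x - mu) * indicator B x) \<in> D}"

text \<open>A conditional lower prevision on C is a map C -> ereal; we represent it by a total
function whose values outside C are irrelevant.\<close>
definition coherent_lp :: "(('a \<Rightarrow> real) \<times> 'a set) set \<Rightarrow> (('a \<Rightarrow> real) \<Rightarrow> 'a set \<Rightarrow> ereal) \<Rightarrow> bool" where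
  "coherent_lp C P \<longleftrightarrow> C \<subseteq> cond_pairs \<and>
     (\<exists>D. coherent_D D \<and> (\<forall>(f, B) \<in> C. P f B = lowprev_D D f B))"

definition A_lp :: "(('a \<Rightarrow> real) \<times> 'a set) set \<Rightarrow> (('a \<Rightarrow> real) \<Rightarrow> 'a set \<Rightarrow> ereal) \<Rightarrow> ('a \<Rightarrow> real) set" where
  "A_lp C P = {g. \<exists>f B mu. (f, B) \<in> C \<and> ereal mu < P f B \<and> g = (\<lambda>x. (f x - mu) * indicator B x)}"

definition E_lp :: "(('a \<Rightarrow> real) \<times> 'a set) set \<Rightarrow> (('a \<Rightarrow> real) \<Rightarrow> 'a set \<Rightarrow> ereal) \<Rightarrow> ('a \<Rightarrow> real) set" where
  "E_lp C P = natext (A_lp C P)"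

definition cyl1 :: "('a \<Rightarrow> real) \<Rightarrow> ('a \<times> 'b \<Rightarrow> real)" where
  "cyl1 f = (\<lambda>p. f (fst p))"
definition cyl2 :: "('b \<Rightarrow> real) \<Rightarrow> ('a \<times> 'b \<Rightarrow> real)" where
  "cyl2 f = (\<lambda>p. f (snd p))"

definition D_prod :: "'a set set \<Rightarrow> 'b set set \<Rightarrow> ('a \<Rightarrow> real) set \<Rightarrow> ('b \<Rightarrow> real) set
     \<Rightarrow> ('a \<times> 'b \<Rightarrow> real) set" where
  "D_prod BB1 BB2 D1 D2 = natext
     ({g. \<exists>f2 B1. f2 \<in> D2 \<and> B1 \<in> BB1 \<union> {UNIV} \<and> g = (\<lambda>p. f2 (snd p) * indicator B1 (fst p))}
    \<union> {g. \<exists>f1 B2. f1 \<in> D1 \<and> B2 \<in> BB2 \<union> {UNIV} \<and> g = (\<lambda>p. f1 (fst p) * indicator B2 (snd p))})"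

definition indep_domain :: "'a set set \<Rightarrow> 'b set set \<Rightarrow> (('a \<times> 'b \<Rightarrow> real) \<times> ('a \<times> 'b) set) set \<Rightarrow> bool" where
  "indep_domain BB1 BB2 C \<longleftrightarrow>
     (\<forall>(f1, B1) \<in> cond_pairs. \<forall>B2 \<in> BB2.
        (cyl1 f1, B1 \<times> UNIV) \<in> C \<longleftrightarrow> (cyl1 f1, B1 \<times> B2) \<in> C) \<and>
     (\<forall>(f2, B2) \<in> cond_pairs. \<forall>B1 \<in> BB1.
        (cyl2 f2, UNIV \<times> B2) \<in> C \<longleftrightarrow> (cyl2 f2, B1 \<times> B2) \<in> C)"

definition epist_indep :: "'a set set \<Rightarrow> 'b set set \<Rightarrow> (('a \<times> 'b \<Rightarrow> real) \<times> ('a \<times> 'b) set) set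
     \<Rightarrow> (('a \<times> 'b \<Rightarrow> real) \<Rightarrow> ('a \<times> 'b) set \<Rightarrow> ereal) \<Rightarrow> bool" where
  "epist_indep BB1 BB2 C P \<longleftrightarrow> indep_domain BB1 BB2 C \<and> coherent_lp C P \<and>
     (\<forall>(f1, B1) \<in> cond_pairs. (cyl1 f1, B1 \<times> UNIV) \<in> C \<longrightarrow>
        (\<forall>B2 \<in> BB2. P (cyl1 f1) (B1 \<times> UNIV) = P (cyl1 f1) (B1 \<times> B2))) \<and>
     (\<forall>(f2, B2) \<in> cond_pairs. (cyl2 f2, UNIV \<times> B2) \<in> C \<longrightarrow>
        (\<forall>B1 \<in> BB1. P (cyl2 f2) (UNIV \<times> B2) = P (cyl2 f2) (B1 \<times> B2)))"

definition indep_product :: "'a set set \<Rightarrow> 'b set set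
     \<Rightarrow> (('a \<Rightarrow> real) \<times> 'a set) set \<Rightarrow> (('a \<Rightarrow> real) \<Rightarrow> 'a set \<Rightarrow> ereal)
     \<Rightarrow> (('b \<Rightarrow> real) \<times> 'b set) set \<Rightarrow> (('b \<Rightarrow> real) \<Rightarrow> 'b set \<Rightarrow> ereal)
     \<Rightarrow> (('a \<times> 'b \<Rightarrow> real) \<times> ('a \<times> 'b) set) set
     \<Rightarrow> (('a \<times> 'b \<Rightarrow> real) \<Rightarrow> ('a \<times> 'b) set \<Rightarrow> ereal) \<Rightarrow> bool" where
  "indep_product BB1 BB2 C1 P1 C2 P2 C P \<longleftrightarrow> epist_indep BB1 BB2 C P \<and>
     (\<forall>(f1, B1) \<in> C1. P (cyl1 f1) (B1 \<times> UNIV) = P1 f1 B1) \<and>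
     (\<forall>(f2, B2) \<in> C2. P (cyl2 f2) (UNIV \<times> B2) = P2 f2 B2)"

definition indep_natext :: "'a set set \<Rightarrow> 'b set set
     \<Rightarrow> (('a \<Rightarrow> real) \<times> 'a set) set \<Rightarrow> (('a \<Rightarrow> real) \<Rightarrow> 'a set \<Rightarrow> ereal)
     \<Rightarrow> (('b \<Rightarrow> real) \<times> 'b set) set \<Rightarrow> (('b \<Rightarrow> real) \<Rightarrow> 'b set \<Rightarrow> ereal)
     \<Rightarrow> (('a \<times> 'b \<Rightarrow> real) \<times> ('a \<times> 'b) set) set
     \<Rightarrow> (('a \<times> 'b \<Rightarrow> real) \<Rightarrow> ('a \<times> 'b) set \<Rightarrow> ereal) \<Rightarrow> bool" where
  "indep_natext BB1 BB2 C1 P1 C2 P2 C P \<longleftrightarrow> indep_product BB1 BB2 C1 P1 C2 P2 C P \<and>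
     (\<forall>Q. indep_product BB1 BB2 C1 P1 C2 P2 C Q \<longrightarrow> (\<forall>(f, B) \<in> C. P f B \<le> Q f B))"

end

theory Submission
  imports Defs
begin


lemma alt_lemma:
  fixes R :: "'r set" and Cols :: "('r \<Rightarrow> real) set"
  assumes "finite R" "finite Cols" "R \<noteq> {} \<or> Cols \<noteq> {}"
  shows "(\<exists>v. (\<forall>c\<in>Cols. 0 \<le> v c) \<and> (\<exists>c\<in>Cols. 0 < v c) \<and> (\<forall>S\<in>R. 0 \<le> (\<Sum>c\<in>Cols. v c * c S)))
       \<or> (\<exists>w. (\<forall>S\<in>R. 0 \<le> w S) \<and> (\<exists>S\<in>R. 0 < w S) \<and> (\<forall>c\<in>Cols. (\<Sum>S\<in>R. w S * c S) \<le> 0))"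
  using assms
proof (induction R arbitrary: Cols rule: finite_induct)
  case empty
  then obtain c0 where "c0 \<in> Cols" by auto
  then show ?case
    by (intro disjI1 exI[of _ "\<lambda>c. if c = c0 then 1 else 0"]) auto
next
  case (insert s R)
  define Cp where "Cp = {c\<in>Cols. 0 \<le> c s}"
  define PP where "PP = {(c1,c2). c1 \<in> Cols \<and> c2 \<in> Cols \<and> 0 < c1 s \<and> c2 s < 0}"
  define pc where "pc = (\<lambda>(c1::'r\<Rightarrow>real,c2::'r\<Rightarrow>real). (\<lambda>S. c1 s * c2 S - c2 s * c1 S))"
  define Cols' where "Cols' = Cp \<union> pc ` PP"
  have finCols': "finite Cols'"
  proof -
    have "PP \<subseteq> Cols \<times> Cols" unfolding PP_def by auto
    then have "finite PP" using insert.prems(1) finite_subset by blast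
    then show ?thesis unfolding Cols'_def Cp_def using insert.prems(1) by auto
  qed
  show ?case
  proof (cases "Cols' = {}")
    case True
    then have neg: "\<forall>c\<in>Cols. c s < 0" unfolding Cols'_def Cp_def by force
    show ?thesis
    proof (intro disjI2 exI[of _ "\<lambda>S. if S = s then 1 else 0"] conjI ballI)
      fix c assume "c \<in> Cols"
      have "(\<Sum>S\<in>insert s R. (if S = s then 1 else 0) * c S) = c s"
        using insert.hyps by (simp add: sum.insert, intro sum.neutral) auto
      then show "(\<Sum>S\<in>insert s R. (if S = s then 1 else 0) * c S) \<le> (0::real)"
        using neg \<open>c \<in> Cols\<close> by auto
    qed auto
  next
    case False
    have IH: "(\<exists>v. (\<forall>c\<in>Cols'. 0 \<le> v c) \<and> (\<exists>c\<in>Cols'. 0 < v c) \<and> (\<forall>S\<in>R. 0 \<le> (\<Sum>c\<in>Cols'. v c * c S)))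
       \<or> (\<exists>w. (\<forall>S\<in>R. 0 \<le> w S) \<and> (\<exists>S\<in>R. 0 < w S) \<and> (\<forall>c\<in>Cols'. (\<Sum>S\<in>R. w S * c S) \<le> 0))"
      using insert.IH[OF finCols'] False by auto
    show ?thesis
    proof (cases "\<exists>v. (\<forall>c\<in>Cols'. 0 \<le> v c) \<and> (\<exists>c\<in>Cols'. 0 < v c) \<and> (\<forall>S\<in>R. 0 \<le> (\<Sum>c\<in>Cols'. v c * c S))")
      case True
      then obtain v' where v'0: "\<forall>c\<in>Cols'. 0 \<le> v' c" and v'p: "\<exists>c\<in>Cols'. 0 < v' c"
        and v'R: "\<forall>S\<in>R. 0 \<le> (\<Sum>c\<in>Cols'. v' c * c S)" by blast
      have rep: "\<forall>c'\<in>Cols'. \<exists>k. (\<forall>c\<in>Cols. 0 \<le> k c) \<and> (\<exists>c\<in>Cols. 0 < k c)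
           \<and> (\<forall>S. c' S = (\<Sum>c\<in>Cols. k c * c S)) \<and> 0 \<le> c' s"
      proof
        fix c' assume "c' \<in> Cols'"
        then consider "c' \<in> Cp" | "c' \<in> pc ` PP" unfolding Cols'_def by blast
        then show "\<exists>k. (\<forall>c\<in>Cols. 0 \<le> k c) \<and> (\<exists>c\<in>Cols. 0 < k c)
           \<and> (\<forall>S. c' S = (\<Sum>c\<in>Cols. k c * c S)) \<and> 0 \<le> c' s"
        proof cases
          case 1
          then have c': "c' \<in> Cols" "0 \<le> c' s" unfolding Cp_def by auto
          have "\<And>S. (\<Sum>c\<in>Cols. (if c = c' then 1 else 0) * c S) = (\<Sum>c\<in>Cols. if c = c' then c' S else 0)"
            by (rule sum.cong) auto
          then have "\<forall>S. (\<Sum>c\<in>Cols. (if c = c' then 1 else 0) * c S) = c' S"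
            using c' insert.prems(1) by (simp add: sum.delta)
          then show ?thesis using c'
            by (intro exI[of _ "\<lambda>c. if c = c' then 1 else 0"]) auto
        next
          case 2
          then obtain c1 c2 where cc: "c1 \<in> Cols" "c2 \<in> Cols" "0 < c1 s" "c2 s < 0"
            and c'eq: "c' = (\<lambda>S. c1 s * c2 S - c2 s * c1 S)"
            unfolding PP_def pc_def by auto
          have ne: "c1 \<noteq> c2" using cc by auto
          define k where "k = (\<lambda>c. (if c = c2 then c1 s else 0) + (if c = c1 then - c2 s else 0))"
          have "\<forall>S. (\<Sum>c\<in>Cols. k c * c S) = c1 s * c2 S - c2 s * c1 S"
          proof
            fix S
            have "(\<Sum>c\<in>Cols. k c * c S) = (\<Sum>c\<in>Cols. (if c = c2 then c1 s * c S else 0)) + (\<Sum>c\<in>Cols. (if c = c1 then - c2 s * c S else 0))"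
              unfolding k_def distrib_right sum.distrib by (intro arg_cong2[where f="(+)"] sum.cong) auto
            also have "\<dots> = c1 s * c2 S - c2 s * c1 S"
              using cc insert.prems(1) by (simp add: sum.delta)
            finally show "(\<Sum>c\<in>Cols. k c * c S) = c1 s * c2 S - c2 s * c1 S" .
          qed
          moreover have "\<forall>c\<in>Cols. 0 \<le> k c" using cc unfolding k_def by auto
          moreover have "0 < k c1" using cc ne unfolding k_def by auto
          ultimately show ?thesis using cc c'eq
            by (intro exI[of _ k]) auto
        qed
      qed
      from bchoice[OF rep] obtain k where k: "\<forall>c'\<in>Cols'. (\<forall>c\<in>Cols. 0 \<le> k c' c) \<and> (\<exists>c\<in>Cols. 0 < k c' c)
           \<and> (\<forall>S. c' S = (\<Sum>c\<in>Cols. k c' c * c S)) \<and> 0 \<le> c' s"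
        by blast
      have k0: "\<forall>c'\<in>Cols'. \<forall>c\<in>Cols. 0 \<le> k c' c" using k by blast
      have kp: "\<forall>c'\<in>Cols'. \<exists>c\<in>Cols. 0 < k c' c" using k by blast
      have keq0: "\<And>c' S. c' \<in> Cols' \<Longrightarrow> c' S = (\<Sum>c\<in>Cols. k c' c * c S)" using k by blast
      have keq: "\<And>c' S. c' \<in> Cols' \<Longrightarrow> (\<Sum>c\<in>Cols. k c' c * c S) = c' S" using keq0 by simp
      have ks: "\<forall>c'\<in>Cols'. 0 \<le> c' s" using k by blast
      define v where "v = (\<lambda>c. \<Sum>c'\<in>Cols'. v' c' * k c' c)"
      have sumeq: "(\<Sum>c\<in>Cols. v c * c S) = (\<Sum>c'\<in>Cols'. v' c' * c' S)" for S
      proof -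
        have "(\<Sum>c\<in>Cols. v c * c S) = (\<Sum>c\<in>Cols. \<Sum>c'\<in>Cols'. v' c' * (k c' c * c S))"
          unfolding v_def by (simp add: sum_distrib_right mult.assoc)
        also have "\<dots> = (\<Sum>c'\<in>Cols'. \<Sum>c\<in>Cols. v' c' * (k c' c * c S))"
          by (rule sum.swap)
        also have "\<dots> = (\<Sum>c'\<in>Cols'. v' c' * c' S)"
          using keq by (simp add: sum_distrib_left[symmetric])
        finally show ?thesis .
      qed
      have v0: "\<forall>c\<in>Cols. 0 \<le> v c"
        unfolding v_def using v'0 k0 by (auto intro!: sum_nonneg)
      obtain c'0 where c'0: "c'0 \<in> Cols'" "0 < v' c'0" using v'p by auto
      then obtain c0 where c0: "c0 \<in> Cols" "0 < k c'0 c0" using kp by blast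
      have "v' c'0 * k c'0 c0 \<le> v c0"
        unfolding v_def
        by (rule member_le_sum[OF c'0(1)]) (use v'0 k0 c0 finCols' in auto)
      then have vp: "0 < v c0" using mult_pos_pos[OF c'0(2) c0(2)] by linarith
      show ?thesis
      proof (intro disjI1 exI[of _ v] conjI ballI)
        fix S assume "S \<in> insert s R"
        then show "0 \<le> (\<Sum>c\<in>Cols. v c * c S)"
        proof
          assume "S = s"
          then show ?thesis unfolding sumeq using v'0 ks by (auto intro!: sum_nonneg)
        next
          assume "S \<in> R" then show ?thesis unfolding sumeq using v'R by auto
        qed
      qed (use v0 vp c0 in auto)
    next
      case False
      then obtain w' where w'0: "\<forall>S\<in>R. 0 \<le> w' S" and w'p: "\<exists>S\<in>R. 0 < w' S"
        and w'C: "\<forall>c\<in>Cols'. (\<Sum>S\<in>R. w' S * c S) \<le> 0" using IH by blast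
      define u where "u = (\<lambda>c. \<Sum>S\<in>R. w' S * c S)"
      have uCp: "u c \<le> 0" if "c \<in> Cols" "0 \<le> c s" for c
        using w'C that unfolding u_def Cols'_def Cp_def by auto
      have uPP: "c1 s * u c2 - c2 s * u c1 \<le> 0" if "c1 \<in> Cols" "c2 \<in> Cols" "0 < c1 s" "c2 s < 0" for c1 c2
      proof -
        have "pc (c1,c2) \<in> Cols'" unfolding Cols'_def PP_def using that by auto
        then have "(\<Sum>S\<in>R. w' S * (c1 s * c2 S - c2 s * c1 S)) \<le> 0"
          using w'C unfolding pc_def by auto
        moreover have "(\<Sum>S\<in>R. w' S * (c1 s * c2 S - c2 s * c1 S)) = c1 s * u c2 - c2 s * u c1"
          unfolding u_def by (simp add: right_diff_distrib sum_subtractf sum_distrib_left algebra_simps)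
        ultimately show ?thesis by simp
      qed
      define L where "L = (\<lambda>c. u c / (- c s)) ` {c\<in>Cols. c s < 0}"
      have finL: "finite L" unfolding L_def using insert.prems(1) by auto
      define t where "t = Max (insert 0 L)"
      have t0: "0 \<le> t" unfolding t_def using finL by auto
      have tL: "u c / (- c s) \<le> t" if "c \<in> Cols" "c s < 0" for c
        unfolding t_def L_def using finL that L_def by (intro Max_ge) auto
      have tin: "t \<in> insert 0 L" unfolding t_def using finL by (intro Max_in) auto
      define w where "w = w'(s := t)"
      have wsum: "(\<Sum>S\<in>insert s R. w S * c S) = t * c s + u c" for c
      proof -
        have "(\<Sum>S\<in>R. w S * c S) = u c"
          unfolding u_def w_def using insert.hyps by (intro sum.cong) auto
        then show ?thesis using insert.hyps by (simp add: sum.insert w_def)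
      qed
      show ?thesis
      proof (intro disjI2 exI[of _ w] conjI ballI)
        fix S assume "S \<in> insert s R" then show "0 \<le> w S"
          using w'0 t0 unfolding w_def by auto
      next
        show "\<exists>S\<in>insert s R. 0 < w S"
          using w'p insert.hyps unfolding w_def by force
      next
        fix c assume c: "c \<in> Cols"
        show "(\<Sum>S\<in>insert s R. w S * c S) \<le> 0"
          unfolding wsum
        proof (cases "c s < 0")
          case True
          have h1: "u c / (- c s) \<le> t" using tL c True by auto
          have "u c \<le> t * (- c s)"
            using pos_divide_le_eq[of "- c s" "u c" t] True h1 by linarith
          then show "t * c s + u c \<le> 0" by simp
        next
          case False
          show "t * c s + u c \<le> 0"
          proof (cases "c s = 0")
            case True then show ?thesis using uCp c by auto
          next
            case False2: False
            then have cpos: "0 < c s" using False by auto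
            have uc: "u c \<le> 0" using uCp c cpos by auto
            from tin show ?thesis
            proof
              assume "t = 0" then show ?thesis using uc by simp
            next
              assume "t \<in> L"
              then obtain c2 where c2: "c2 \<in> Cols" "c2 s < 0" and teq: "t = u c2 / (- c2 s)"
                unfolding L_def by auto
              have pp: "c s * u c2 - c2 s * u c \<le> 0" using uPP[OF c c2(1) cpos c2(2)] .
              have "t * c s = (c s * u c2) / (- c2 s)" using teq by simp
              also have "\<dots> \<le> (c2 s * u c) / (- c2 s)"
                using pp c2 by (intro divide_right_mono) auto
              also have "\<dots> = - u c" using c2 by (simp add: field_simps)
              finally show ?thesis by simp
            qed
          qed
        qed
      qed
    qed
  qed
qed


lemma coh_gamble: "coherent_D D \<Longrightarrow> f \<in> D \<Longrightarrow> gamble f"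
  unfolding coherent_D_def gambles_def by auto
lemma coh_pos: "coherent_D D \<Longrightarrow> gamble f \<Longrightarrow> \<forall>x. 0 \<le> f x \<Longrightarrow> f \<noteq> (\<lambda>x. 0) \<Longrightarrow> f \<in> D"
  unfolding coherent_D_def by blast
lemma coh_scale: "coherent_D D \<Longrightarrow> f \<in> D \<Longrightarrow> 0 < lam \<Longrightarrow> (\<lambda>x. lam * f x) \<in> D"
  unfolding coherent_D_def by blast
lemma coh_add: "coherent_D D \<Longrightarrow> f \<in> D \<Longrightarrow> g \<in> D \<Longrightarrow> (\<lambda>x. f x + g x) \<in> D"
  unfolding coherent_D_def by blast
lemma coh_nonpos: "coherent_D D \<Longrightarrow> \<forall>x. f x \<le> 0 \<Longrightarrow> f \<notin> D"
  unfolding coherent_D_def by blast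
lemma gambleI: "(\<And>x. \<bar>f x\<bar> \<le> M) \<Longrightarrow> gamble f"
  unfolding gamble_def by auto
lemma gambleE: "gamble f \<Longrightarrow> (\<And>M. (\<And>x. \<bar>f x\<bar> \<le> M) \<Longrightarrow> P) \<Longrightarrow> P"
  unfolding gamble_def by auto

lemma gamble_add: "gamble f \<Longrightarrow> gamble g \<Longrightarrow> gamble (\<lambda>x. f x + g x)"
proof -
  assume "gamble f" "gamble g"
  then obtain M N where "\<And>x. \<bar>f x\<bar> \<le> M" "\<And>x. \<bar>g x\<bar> \<le> N" by (metis gambleE)
  then show ?thesis
  proof (intro gambleI[of _ "M + N"])
    fix x
    assume "\<And>x. \<bar>f x\<bar> \<le> M" "\<And>x. \<bar>g x\<bar> \<le> N"
    then have "\<bar>f x\<bar> + \<bar>g x\<bar> \<le> M + N" by (intro add_mono)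
    then show "\<bar>f x + g x\<bar> \<le> M + N" using abs_triangle_ineq[of "f x" "g x"] by linarith
  qed
qed

lemma gamble_scale: "gamble f \<Longrightarrow> gamble (\<lambda>x. c * f x)"
proof -
  assume "gamble f"
  then obtain M where M: "\<And>x. \<bar>f x\<bar> \<le> M" by (metis gambleE)
  show ?thesis
  proof (rule gambleI[of _ "\<bar>c\<bar> * M"])
    fix x show "\<bar>c * f x\<bar> \<le> \<bar>c\<bar> * M" using M[of x] by (simp add: abs_mult mult_left_mono)
  qed
qed

lemma gamble_ind: "gamble f \<Longrightarrow> gamble (\<lambda>x. f x * indicator B x)"
proof -
  assume "gamble f"
  then obtain M where M: "\<And>x. \<bar>f x\<bar> \<le> M" by (metis gambleE)
  show ?thesis
  proof (rule gambleI[of _ "\<bar>M\<bar>"])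
    fix x show "\<bar>f x * indicator B x\<bar> \<le> \<bar>M\<bar>" using M[of x] by (auto simp: indicator_def)
  qed
qed

lemma gamble_const: "gamble (\<lambda>x. c)"
  by (rule gambleI[of _ "\<bar>c\<bar>"]) auto

lemma gamble_comp: "gamble f \<Longrightarrow> gamble (\<lambda>x. f (h x))"
  unfolding gamble_def by auto

lemma coh_up: assumes "coherent_D D" "d \<in> D" "gamble g" "\<forall>x. d x \<le> g x" shows "g \<in> D"
proof (cases "(\<lambda>x. g x - d x) = (\<lambda>x. 0)")
  case True
  have "g x = d x" for x using fun_cong[OF True, of x] by simp
  then have "g = d" by (rule ext)
  then show ?thesis using assms by simp
next
  case False
  have gd: "gamble d" using assms coh_gamble by blast
  have gam: "gamble (\<lambda>x. g x - d x)"
    using gamble_add[OF assms(3) gamble_scale[OF gd, of "-1"]] by simp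
  have "(\<lambda>x. g x - d x) \<in> D"
    by (rule coh_pos[OF assms(1) gam _ False]) (use assms(4) in auto)
  from coh_add[OF assms(1) assms(2) this] show ?thesis by simp
qed

lemma comb_lemma:
  assumes D: "coherent_D D" and K: "finite K" and c0: "\<forall>k\<in>K. 0 \<le> c k"
    and cp: "\<exists>k\<in>K. 0 < c k" and f: "\<forall>k\<in>K. f k \<in> D"
  shows "(\<lambda>x. \<Sum>k\<in>K. c k * f k x) \<in> D"
proof -
  define Kp where "Kp = {k\<in>K. 0 < c k}"
  have eq: "(\<lambda>x. \<Sum>k\<in>K. c k * f k x) = (\<lambda>x. \<Sum>k\<in>Kp. c k * f k x)"
  proof
    fix x show "(\<Sum>k\<in>K. c k * f k x) = (\<Sum>k\<in>Kp. c k * f k x)"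
      unfolding Kp_def using K c0 by (intro sum.mono_neutral_right) auto
  qed
  have "finite Kp" "Kp \<noteq> {}" "\<forall>k\<in>Kp. 0 < c k \<and> f k \<in> D"
    unfolding Kp_def using K cp f by auto
  then have "(\<lambda>x. \<Sum>k\<in>Kp. c k * f k x) \<in> D"
  proof (induction Kp rule: finite_ne_induct)
    case (singleton k) then show ?case using coh_scale[OF D] by auto
  next
    case (insert k F)
    then have "(\<lambda>x. c k * f k x + (\<Sum>k\<in>F. c k * f k x)) \<in> D"
      using coh_add[OF D] coh_scale[OF D] by auto
    then show ?case using insert by (simp add: sum.insert)
  qed
  then show ?thesis using eq by simp
qed



lemma core_lemma:
  fixes a :: "'i \<Rightarrow> 'b \<Rightarrow> real" and E1 :: "'i \<Rightarrow> 'a set"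
    and b :: "'j \<Rightarrow> 'a \<Rightarrow> real" and E2 :: "'j \<Rightarrow> 'b set"
  assumes D1: "coherent_D D1" and D2: "coherent_D D2" and fI: "finite I" and fJ: "finite J"
    and aI: "\<forall>i\<in>I. a i \<in> D2 \<and> E1 i \<noteq> {}" and bJ: "\<forall>j\<in>J. b j \<in> D1 \<and> E2 j \<noteq> {}"
    and le: "\<forall>x1 x2. (\<Sum>i\<in>I. a i x2 * indicator (E1 i) x1) + (\<Sum>j\<in>J. b j x1 * indicator (E2 j) x2) \<le> 0"
  shows "I = {} \<and> J = {}"
proof (rule ccontr)
  assume nonempty: "\<not> (I = {} \<and> J = {})"
  define Sx where "Sx = (\<lambda>x1. {i\<in>I. x1 \<in> E1 i})"
  define Tx where "Tx = (\<lambda>x2. {j\<in>J. x2 \<in> E2 j})"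
  define \<alpha> where "\<alpha> = (\<lambda>S x2. \<Sum>i\<in>S. a i x2)"
  define \<beta> where "\<beta> = (\<lambda>T x1. \<Sum>j\<in>T. b j x1)"
  have key: "\<alpha> (Sx x1) x2 + \<beta> (Tx x2) x1 \<le> 0" for x1 x2
  proof -
    have "(\<Sum>i\<in>I. a i x2 * indicator (E1 i) x1) = (\<Sum>i\<in>I. if x1 \<in> E1 i then a i x2 else 0)"
      by (rule sum.cong) (auto simp: indicator_def)
    also have "\<dots> = \<alpha> (Sx x1) x2"
      unfolding \<alpha>_def Sx_def using fI by (rule sum.inter_filter[symmetric])
    finally have e1: "(\<Sum>i\<in>I. a i x2 * indicator (E1 i) x1) = \<alpha> (Sx x1) x2" .
    have "(\<Sum>j\<in>J. b j x1 * indicator (E2 j) x2) = (\<Sum>j\<in>J. if x2 \<in> E2 j then b j x1 else 0)"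
      by (rule sum.cong) (auto simp: indicator_def)
    also have "\<dots> = \<beta> (Tx x2) x1"
      unfolding \<beta>_def Tx_def using fJ by (rule sum.inter_filter[symmetric])
    finally have e2: "(\<Sum>j\<in>J. b j x1 * indicator (E2 j) x2) = \<beta> (Tx x2) x1" .
    have "(\<Sum>i\<in>I. a i x2 * indicator (E1 i) x1) + (\<Sum>j\<in>J. b j x1 * indicator (E2 j) x2) \<le> 0"
      using le by blast
    then show ?thesis using e1 e2 by simp
  qed
  define Rs where "Rs = range Sx - {{}}"
  define Ts where "Ts = range Tx - {{}}"
  have fRs: "finite Rs"
  proof -
    have "range Sx \<subseteq> Pow I" unfolding Sx_def by auto
    then show ?thesis unfolding Rs_def using fI by (meson finite_Diff finite_Pow_iff finite_subset)
  qed
  have fTs: "finite Ts"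
  proof -
    have "range Tx \<subseteq> Pow J" unfolding Tx_def by auto
    then show ?thesis unfolding Ts_def using fJ by (meson finite_Diff finite_Pow_iff finite_subset)
  qed
  define Mm where "Mm = (\<lambda>S T. SUP x2\<in>{x2. Tx x2 = T}. \<alpha> S x2)"
  define col where "col = (\<lambda>T S. Mm S T)"
  define Cols where "Cols = col ` Ts"
  have fCols: "finite Cols" unfolding Cols_def using fTs by auto
  have f1: "Mm S T \<le> - \<beta> T x1" if "T \<in> Ts" "Sx x1 = S" for S T x1
  proof -
    show ?thesis unfolding Mm_def
    proof (rule cSUP_least)
      show "{x2. Tx x2 = T} \<noteq> {}" using that unfolding Ts_def by auto
    next
      fix x2 assume "x2 \<in> {x2. Tx x2 = T}"
      then show "\<alpha> S x2 \<le> - \<beta> T x1" using key[of x1 x2] that by simp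
    qed
  qed
  have f2: "\<alpha> S x2 \<le> Mm S T" if hh: "S \<in> Rs" "Tx x2 = T" for S T x2
  proof -
    obtain x1 where x1: "Sx x1 = S" using hh unfolding Rs_def by auto
    have "bdd_above ((\<lambda>x2. \<alpha> S x2) ` {x2. Tx x2 = T})"
    proof (intro bdd_aboveI2[of _ _ "- \<beta> T x1"])
      fix x2 assume "x2 \<in> {x2. Tx x2 = T}"
      then show "\<alpha> S x2 \<le> - \<beta> T x1" using key[of x1 x2] x1 by simp
    qed
    then show ?thesis unfolding Mm_def using that by (intro cSUP_upper) auto
  qed
  have \<alpha>0: "\<alpha> {} = (\<lambda>x. 0)" unfolding \<alpha>_def by auto
  have \<beta>0: "\<beta> {} = (\<lambda>x. 0)" unfolding \<beta>_def by auto
  have f3: "\<beta> T x1 \<le> 0" if hh: "Sx x1 = {}" "T \<in> Ts" for T x1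
  proof -
    obtain x2 where "Tx x2 = T" using hh unfolding Ts_def by auto
    then show ?thesis using key[of x1 x2] that \<alpha>0 by simp
  qed
  have f4: "\<alpha> S x2 \<le> 0" if hh: "Tx x2 = {}" "S \<in> Rs" for S x2
  proof -
    obtain x1 where "Sx x1 = S" using hh unfolding Rs_def by auto
    then show ?thesis using key[of x1 x2] that \<beta>0 by simp
  qed
  have f5: "\<alpha> S \<in> D2" if "S \<in> Rs" for S
  proof -
    have S: "S \<subseteq> I" "S \<noteq> {}" using that unfolding Rs_def Sx_def by auto
    then have "finite S" using fI finite_subset by blast
    have "(\<lambda>x. \<Sum>i\<in>S. 1 * a i x) \<in> D2"
      using S aI \<open>finite S\<close> by (intro comb_lemma[OF D2]) auto
    then show ?thesis unfolding \<alpha>_def by simp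
  qed
  have f6: "\<beta> T \<in> D1" if "T \<in> Ts" for T
  proof -
    have T: "T \<subseteq> J" "T \<noteq> {}" using that unfolding Ts_def Tx_def by auto
    then have "finite T" using fJ finite_subset by blast
    have "(\<lambda>x. \<Sum>j\<in>T. 1 * b j x) \<in> D1"
      using T bJ \<open>finite T\<close> by (intro comb_lemma[OF D1]) auto
    then show ?thesis unfolding \<beta>_def by simp
  qed
  have ne: "Rs \<noteq> {} \<or> Cols \<noteq> {}"
  proof (cases "I = {}")
    case False
    then obtain i where i: "i \<in> I" by auto
    then obtain x1 where "x1 \<in> E1 i" using aI by auto
    then have "Sx x1 \<in> Rs" unfolding Rs_def Sx_def using i by auto
    then show ?thesis by auto
  next
    case True
    then obtain j where j: "j \<in> J" using nonempty by auto
    then obtain x2 where "x2 \<in> E2 j" using bJ by auto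
    then have "Tx x2 \<in> Ts" unfolding Ts_def Tx_def using j by auto
    then show ?thesis unfolding Cols_def by auto
  qed
  from alt_lemma[OF fRs fCols ne] show False
  proof
    assume "\<exists>v. (\<forall>c\<in>Cols. 0 \<le> v c) \<and> (\<exists>c\<in>Cols. 0 < v c) \<and> (\<forall>S\<in>Rs. 0 \<le> (\<Sum>c\<in>Cols. v c * c S))"
    then obtain v where v0: "\<forall>c\<in>Cols. 0 \<le> v c" and vp: "\<exists>c\<in>Cols. 0 < v c"
      and vR: "\<forall>S\<in>Rs. 0 \<le> (\<Sum>c\<in>Cols. v c * c S)" by blast
    have "\<forall>c\<in>Cols. \<exists>T. T \<in> Ts \<and> col T = c" unfolding Cols_def by auto
    then obtain Tc where Tc: "\<forall>c\<in>Cols. Tc c \<in> Ts \<and> col (Tc c) = c" by metis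
    define \<phi> where "\<phi> = (\<lambda>x. \<Sum>c\<in>Cols. v c * \<beta> (Tc c) x)"
    have "\<phi> \<in> D1" unfolding \<phi>_def using fCols v0 vp Tc f6 by (intro comb_lemma[OF D1]) auto
    moreover have "\<forall>x. \<phi> x \<le> 0"
    proof
      fix x1
      show "\<phi> x1 \<le> 0"
      proof (cases "Sx x1 = {}")
        case True
        then show ?thesis unfolding \<phi>_def using v0 Tc f3
          by (intro sum_nonpos) (simp add: mult_nonneg_nonpos)
      next
        case False
        then have SR: "Sx x1 \<in> Rs" unfolding Rs_def by auto
        have "\<phi> x1 \<le> (\<Sum>c\<in>Cols. v c * (- c (Sx x1)))"
          unfolding \<phi>_def
        proof (intro sum_mono mult_left_mono)
          fix c assume c: "c \<in> Cols"
          have ceq: "col (Tc c) = c" using Tc c by blast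
          have "c (Sx x1) = col (Tc c) (Sx x1)" using ceq by simp
          then have "c (Sx x1) = Mm (Sx x1) (Tc c)" unfolding col_def by simp
          then show "\<beta> (Tc c) x1 \<le> - c (Sx x1)"
            using f1[of "Tc c" x1 "Sx x1"] Tc c by auto
          show "0 \<le> v c" using v0 c by auto
        qed
        also have "\<dots> = - (\<Sum>c\<in>Cols. v c * c (Sx x1))" by (simp add: sum_negf)
        also have "\<dots> \<le> 0" using vR SR by auto
        finally show ?thesis .
      qed
    qed
    ultimately show False using coh_nonpos[OF D1] by blast
  next
    assume "\<exists>w. (\<forall>S\<in>Rs. 0 \<le> w S) \<and> (\<exists>S\<in>Rs. 0 < w S) \<and> (\<forall>c\<in>Cols. (\<Sum>S\<in>Rs. w S * c S) \<le> 0)"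
    then obtain w where w0: "\<forall>S\<in>Rs. 0 \<le> w S" and wp: "\<exists>S\<in>Rs. 0 < w S"
      and wC: "\<forall>c\<in>Cols. (\<Sum>S\<in>Rs. w S * c S) \<le> 0" by blast
    define \<psi> where "\<psi> = (\<lambda>x. \<Sum>S\<in>Rs. w S * \<alpha> S x)"
    have "\<psi> \<in> D2" unfolding \<psi>_def using fRs w0 wp f5 by (intro comb_lemma[OF D2]) auto
    moreover have "\<forall>x. \<psi> x \<le> 0"
    proof
      fix x2
      show "\<psi> x2 \<le> 0"
      proof (cases "Tx x2 = {}")
        case True
        then show ?thesis unfolding \<psi>_def using w0 f4
          by (intro sum_nonpos) (simp add: mult_nonneg_nonpos)
      next
        case False
        then have TT: "Tx x2 \<in> Ts" unfolding Ts_def by auto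
        have "\<psi> x2 \<le> (\<Sum>S\<in>Rs. w S * col (Tx x2) S)"
          unfolding \<psi>_def col_def
        proof (intro sum_mono mult_left_mono)
          fix S assume S: "S \<in> Rs"
          show "\<alpha> S x2 \<le> Mm S (Tx x2)" using f2[OF S] by auto
          show "0 \<le> w S" using w0 S by auto
        qed
        also have "\<dots> \<le> 0" using wC TT unfolding Cols_def by auto
        finally show ?thesis .
      qed
    qed
    ultimately show False using coh_nonpos[OF D2] by blast
  qed
qed



lemma sum_split_add: "(\<Sum>i<(n::nat)+m. F i) = (\<Sum>i<n. F i) + (\<Sum>i<m. F (n + i))"
  by (induction m) (simp_all add: add.assoc)

lemma natextI:
  assumes "1 \<le> (n::nat)" "\<forall>i<n. 0 < lam i \<and> fs i \<in> G \<union> gambles_pos" "g = (\<lambda>x. \<Sum>i<n. lam i * fs i x)"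
  shows "g \<in> natext G"
  unfolding natext_def posi_def using assms by blast

lemma natext_G: assumes "f \<in> G" shows "f \<in> natext G"
proof -
  have "f = (\<lambda>x. \<Sum>i<(1::nat). (\<lambda>_. 1::real) i * (\<lambda>_. f) i x)" by simp
  then show ?thesis unfolding natext_def posi_def
    by (intro CollectI exI[of _ "1::nat"] exI[of _ "\<lambda>_. 1::real"] exI[of _ "\<lambda>_. f"]) (use assms in auto)
qed

lemma natext_pos: assumes "f \<in> gambles_pos" shows "f \<in> natext G"
proof -
  have "f = (\<lambda>x. \<Sum>i<(1::nat). (\<lambda>_. 1::real) i * (\<lambda>_. f) i x)" by simp
  then show ?thesis unfolding natext_def posi_def
    by (intro CollectI exI[of _ "1::nat"] exI[of _ "\<lambda>_. 1::real"] exI[of _ "\<lambda>_. f"]) (use assms in auto)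
qed

lemma natext_scale: assumes "f \<in> natext G" "0 < c" shows "(\<lambda>x. c * f x) \<in> natext G"
proof -
  from assms(1) obtain n :: nat and lam :: "nat \<Rightarrow> real" and fs where n: "1 \<le> n" and h: "\<forall>i<n. 0 < lam i \<and> fs i \<in> G \<union> gambles_pos"
    and f: "f = (\<lambda>x. \<Sum>i<n. lam i * fs i x)" unfolding natext_def posi_def by blast
  have "(\<lambda>x. c * f x) = (\<lambda>x. \<Sum>i<n. (\<lambda>i. c * lam i) i * fs i x)"
    unfolding f by (simp add: sum_distrib_left mult.assoc)
  moreover have "\<forall>i<n. 0 < c * lam i \<and> fs i \<in> G \<union> gambles_pos" using h assms(2) by auto
  ultimately show ?thesis using n by (intro natextI[of n "\<lambda>i. c * lam i" fs]) auto
qed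

lemma natext_add: assumes "f \<in> natext G" "g \<in> natext G" shows "(\<lambda>x. f x + g x) \<in> natext G"
proof -
  from assms(1) obtain n :: nat and lam :: "nat \<Rightarrow> real" and fs where n: "1 \<le> n" and h: "\<forall>i<n. 0 < lam i \<and> fs i \<in> G \<union> gambles_pos"
    and f: "f = (\<lambda>x. \<Sum>i<n. lam i * fs i x)" unfolding natext_def posi_def by blast
  from assms(2) obtain m :: nat and mu :: "nat \<Rightarrow> real" and gs where m: "1 \<le> m" and h2: "\<forall>i<m. 0 < mu i \<and> gs i \<in> G \<union> gambles_pos"
    and g: "g = (\<lambda>x. \<Sum>i<m. mu i * gs i x)" unfolding natext_def posi_def by blast
  define L where "L = (\<lambda>i. if i < n then lam i else mu (i - n))"
  define H where "H = (\<lambda>i. if i < n then fs i else gs (i - n))"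
  have "(\<lambda>x. f x + g x) = (\<lambda>x. \<Sum>i<n+m. L i * H i x)"
  proof
    fix x
    have "(\<Sum>i<n+m. L i * H i x) = (\<Sum>i<n. L i * H i x) + (\<Sum>i<m. L (n+i) * H (n+i) x)"
      by (rule sum_split_add)
    also have "(\<Sum>i<n. L i * H i x) = f x" unfolding f L_def H_def by simp
    also have "(\<Sum>i<m. L (n+i) * H (n+i) x) = g x" unfolding g L_def H_def by simp
    finally show "f x + g x = (\<Sum>i<n+m. L i * H i x)" by simp
  qed
  moreover have "\<forall>i<n+m. 0 < L i \<and> H i \<in> G \<union> gambles_pos"
  proof (intro allI impI)
    fix i assume "i < n + m"
    then show "0 < L i \<and> H i \<in> G \<union> gambles_pos"
      using h h2 unfolding L_def H_def by (cases "i < n") auto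
  qed
  moreover have "1 \<le> n + m" using n by simp
  ultimately show ?thesis by (intro natextI[of "n+m" L H]) auto
qed

lemma natext_induct:
  assumes g: "g \<in> natext G" and base: "\<And>f. f \<in> G \<Longrightarrow> P f" and pos: "\<And>f. f \<in> gambles_pos \<Longrightarrow> P f"
    and sc: "\<And>f lam. P f \<Longrightarrow> 0 < lam \<Longrightarrow> P (\<lambda>x. lam * f x)"
    and ad: "\<And>f h. P f \<Longrightarrow> P h \<Longrightarrow> P (\<lambda>x. f x + h x)"
  shows "P g"
proof -
  from g obtain n :: nat and lam :: "nat \<Rightarrow> real" and fs where n: "1 \<le> n" and h: "\<forall>i<n. 0 < lam i \<and> fs i \<in> G \<union> gambles_pos"
    and geq: "g = (\<lambda>x. \<Sum>i<n. lam i * fs i x)" unfolding natext_def posi_def by blast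
  have Pi: "P (\<lambda>x. lam i * fs i x)" if "i < n" for i
  proof -
    have "P (fs i)" using h that base pos by blast
    then show ?thesis using sc h that by blast
  qed
  have "\<forall>k. 1 \<le> k \<longrightarrow> k \<le> n \<longrightarrow> P (\<lambda>x. \<Sum>i<k. lam i * fs i x)"
  proof (intro allI)
    fix k show "1 \<le> k \<longrightarrow> k \<le> n \<longrightarrow> P (\<lambda>x. \<Sum>i<k. lam i * fs i x)"
    proof (induction k)
      case 0 then show ?case by simp
    next
      case (Suc k)
      show ?case
      proof (intro impI)
        assume "Suc k \<le> n"
        then have kn: "k < n" by simp
        show "P (\<lambda>x. \<Sum>i<Suc k. lam i * fs i x)"
        proof (cases "k = 0")
          case True then show ?thesis using Pi[OF kn] by simp
        next
          case False
          then have "P (\<lambda>x. \<Sum>i<k. lam i * fs i x)" using Suc kn by simp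
          from ad[OF this Pi[OF kn]] show ?thesis by simp
        qed
      qed
    qed
  qed
  then show ?thesis using n geq by auto
qed

lemma natext_mono: "G \<subseteq> G' \<Longrightarrow> natext G \<subseteq> natext G'"
  unfolding natext_def posi_def by blast

lemma natext_sub: fixes D :: "('a \<Rightarrow> real) set" assumes "coherent_D D" "G \<subseteq> D" shows "natext G \<subseteq> D"
proof
  fix g assume "g \<in> natext G"
  then show "g \<in> D"
  proof (rule natext_induct)
    fix f :: "'a \<Rightarrow> real" assume "f \<in> gambles_pos" then show "f \<in> D"
      using coh_pos[OF assms(1)] unfolding gambles_pos_def by blast
  qed (use assms coh_scale coh_add in blast)+
qed

lemma gambles_pos_gamble: "f \<in> gambles_pos \<Longrightarrow> gamble f"
  unfolding gambles_pos_def by auto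

lemma coherent_natext:
  assumes G: "G \<subseteq> gambles" and np: "\<And>d. d \<in> natext G \<Longrightarrow> \<forall>x. d x \<le> 0 \<Longrightarrow> False"
  shows "coherent_D (natext G)"
  unfolding coherent_D_def
proof (intro conjI)
  show "natext G \<subseteq> gambles"
  proof
    fix g assume "g \<in> natext G"
    then have "gamble g"
      by (rule natext_induct) (use G gambles_pos_gamble gamble_scale gamble_add in \<open>auto simp: gambles_def\<close>)
    then show "g \<in> gambles" unfolding gambles_def by simp
  qed
  show "\<forall>f. gamble f \<and> (\<forall>x. 0 \<le> f x) \<and> f \<noteq> (\<lambda>x. 0) \<longrightarrow> f \<in> natext G"
    using natext_pos unfolding gambles_pos_def by blast
  show "\<forall>f\<in>natext G. \<forall>lam. 0 < lam \<longrightarrow> (\<lambda>x. lam * f x) \<in> natext G"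
    using natext_scale by blast
  show "\<forall>f\<in>natext G. \<forall>g\<in>natext G. (\<lambda>x. f x + g x) \<in> natext G"
    using natext_add by blast
  show "\<forall>f. (\<forall>x. f x \<le> 0) \<longrightarrow> f \<notin> natext G"
    using np by blast
qed



lemma gamble_ind_comp: "gamble f \<Longrightarrow> gamble (\<lambda>x. f x * indicator B (h x))"
proof -
  assume "gamble f"
  then obtain M where M: "\<And>x. \<bar>f x\<bar> \<le> M" by (metis gambleE)
  show ?thesis
  proof (rule gambleI[of _ "\<bar>M\<bar>"])
    fix x show "\<bar>f x * indicator B (h x)\<bar> \<le> \<bar>M\<bar>" using M[of x] by (auto simp: indicator_def)
  qed
qed

lemma Dprod_gen_gambles:
  assumes D1: "coherent_D D1" and D2: "coherent_D D2"
  shows "{g. \<exists>f2 B1. f2 \<in> D2 \<and> B1 \<in> BB1 \<union> {UNIV} \<and> g = (\<lambda>p. f2 (snd p) * indicator B1 (fst p))}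
    \<union> {g. \<exists>f1 B2. f1 \<in> D1 \<and> B2 \<in> BB2 \<union> {UNIV} \<and> g = (\<lambda>p. f1 (fst p) * indicator B2 (snd p))} \<subseteq> gambles"
proof
  fix g :: "'a \<times> 'b \<Rightarrow> real"
  assume "g \<in> {g. \<exists>f2 B1. f2 \<in> D2 \<and> B1 \<in> BB1 \<union> {UNIV} \<and> g = (\<lambda>p. f2 (snd p) * indicator B1 (fst p))}
    \<union> {g. \<exists>f1 B2. f1 \<in> D1 \<and> B2 \<in> BB2 \<union> {UNIV} \<and> g = (\<lambda>p. f1 (fst p) * indicator B2 (snd p))}"
  then show "g \<in> gambles"
  proof
    assume "g \<in> {g. \<exists>f2 B1. f2 \<in> D2 \<and> B1 \<in> BB1 \<union> {UNIV} \<and> g = (\<lambda>p. f2 (snd p) * indicator B1 (fst p))}"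
    then obtain f2 B1 where "f2 \<in> D2" "g = (\<lambda>p. f2 (snd p) * indicator B1 (fst p))" by blast
    then show ?thesis using coh_gamble[OF D2] gamble_ind_comp[OF gamble_comp] unfolding gambles_def by blast
  next
    assume "g \<in> {g. \<exists>f1 B2. f1 \<in> D1 \<and> B2 \<in> BB2 \<union> {UNIV} \<and> g = (\<lambda>p. f1 (fst p) * indicator B2 (snd p))}"
    then obtain f1 B2 where "f1 \<in> D1" "g = (\<lambda>p. f1 (fst p) * indicator B2 (snd p))" by blast
    then show ?thesis using coh_gamble[OF D1] gamble_ind_comp[OF gamble_comp] unfolding gambles_def by blast
  qed
qed

lemma Dprod_coherent:
  fixes BB1 :: "'a set set" and BB2 :: "'b set set"
  assumes D1: "coherent_D D1" and D2: "coherent_D D2" and e1: "{} \<notin> BB1" and e2: "{} \<notin> BB2"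
  shows "coherent_D (D_prod BB1 BB2 D1 D2)"
  unfolding D_prod_def
proof (rule coherent_natext)
  show "{g. \<exists>f2 B1. f2 \<in> D2 \<and> B1 \<in> BB1 \<union> {UNIV} \<and> g = (\<lambda>p. f2 (snd p) * indicator B1 (fst p))}
    \<union> {g. \<exists>f1 B2. f1 \<in> D1 \<and> B2 \<in> BB2 \<union> {UNIV} \<and> g = (\<lambda>p. f1 (fst p) * indicator B2 (snd p))} \<subseteq> gambles"
    by (rule Dprod_gen_gambles[OF D1 D2])
next
  define A12 where "A12 = {g. \<exists>f2 B1. f2 \<in> D2 \<and> B1 \<in> BB1 \<union> {UNIV} \<and> g = (\<lambda>p::'a\<times>'b. f2 (snd p) * indicator B1 (fst p))}"
  define A21 where "A21 = {g. \<exists>f1 B2. f1 \<in> D1 \<and> B2 \<in> BB2 \<union> {UNIV} \<and> g = (\<lambda>p::'a\<times>'b. f1 (fst p) * indicator B2 (snd p))}"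
  fix d assume d: "d \<in> natext (A12 \<union> A21)" and dle: "\<forall>x. d x \<le> 0"
  from d obtain n :: nat and lam :: "nat \<Rightarrow> real" and fs where n: "1 \<le> n"
    and h: "\<forall>i<n. 0 < lam i \<and> fs i \<in> (A12 \<union> A21) \<union> gambles_pos"
    and deq: "d = (\<lambda>x. \<Sum>i<n. lam i * fs i x)" unfolding natext_def posi_def by blast
  define I where "I = {i. i < n \<and> fs i \<in> A12}"
  define J where "J = {i. i < n \<and> fs i \<notin> A12 \<and> fs i \<in> A21}"
  define K where "K = {i. i < n \<and> fs i \<notin> A12 \<and> fs i \<notin> A21}"
  have fI: "finite I" and fJ: "finite J" and fK: "finite K" unfolding I_def J_def K_def by auto
  have "\<forall>i\<in>I. \<exists>f2 B1. f2 \<in> D2 \<and> B1 \<in> BB1 \<union> {UNIV} \<and> fs i = (\<lambda>p. f2 (snd p) * indicator B1 (fst p))"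
    unfolding I_def A12_def by blast
  then obtain F2 EB1 where F2: "\<forall>i\<in>I. F2 i \<in> D2 \<and> EB1 i \<in> BB1 \<union> {UNIV} \<and> fs i = (\<lambda>p. F2 i (snd p) * indicator (EB1 i) (fst p))"
    by metis
  have "\<forall>i\<in>J. \<exists>f1 B2. f1 \<in> D1 \<and> B2 \<in> BB2 \<union> {UNIV} \<and> fs i = (\<lambda>p. f1 (fst p) * indicator B2 (snd p))"
    unfolding J_def A21_def by blast
  then obtain F1 EB2 where F1: "\<forall>i\<in>J. F1 i \<in> D1 \<and> EB2 i \<in> BB2 \<union> {UNIV} \<and> fs i = (\<lambda>p. F1 i (fst p) * indicator (EB2 i) (snd p))"
    by metis
  define a where "a = (\<lambda>i x2. lam i * F2 i x2)"
  define b where "b = (\<lambda>i x1. lam i * F1 i x1)"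
  have un: "{..<n} = I \<union> (J \<union> K)" unfolding I_def J_def K_def by auto
  have dis1: "I \<inter> (J \<union> K) = {}" and dis2: "J \<inter> K = {}" unfolding I_def J_def K_def by auto
  have dsplit: "d (x1, x2) = (\<Sum>i\<in>I. a i x2 * indicator (EB1 i) x1) + (\<Sum>j\<in>J. b j x1 * indicator (EB2 j) x2)
      + (\<Sum>k\<in>K. lam k * fs k (x1, x2))" for x1 x2
  proof -
    have "d (x1, x2) = (\<Sum>i\<in>I. lam i * fs i (x1,x2)) + ((\<Sum>i\<in>J. lam i * fs i (x1,x2)) + (\<Sum>i\<in>K. lam i * fs i (x1,x2)))"
      unfolding deq un using fI fJ fK dis1 dis2 by (simp add: sum.union_disjoint)
    moreover have "(\<Sum>i\<in>I. lam i * fs i (x1,x2)) = (\<Sum>i\<in>I. a i x2 * indicator (EB1 i) x1)"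
      using F2 unfolding a_def by (intro sum.cong) auto
    moreover have "(\<Sum>i\<in>J. lam i * fs i (x1,x2)) = (\<Sum>j\<in>J. b j x1 * indicator (EB2 j) x2)"
      using F1 unfolding b_def by (intro sum.cong) auto
    ultimately show ?thesis by simp
  qed
  have Kpos: "\<forall>k\<in>K. fs k \<in> gambles_pos \<and> 0 < lam k" using h unfolding K_def by auto
  have Kp2: "\<forall>k\<in>K. \<forall>p. 0 \<le> fs k p" using Kpos unfolding gambles_pos_def by blast
  have hnn: "0 \<le> (\<Sum>k\<in>K. lam k * fs k p)" for p
  proof (intro sum_nonneg)
    fix k assume "k \<in> K"
    then show "0 \<le> lam k * fs k p" using Kpos Kp2 by (meson less_imp_le mult_nonneg_nonneg)
  qed
  have "I = {} \<and> J = {}"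
  proof (rule core_lemma[OF D1 D2 fI fJ])
    show "\<forall>i\<in>I. a i \<in> D2 \<and> EB1 i \<noteq> {}"
    proof
      fix i assume i: "i \<in> I"
      have "lam i > 0" using h i unfolding I_def by auto
      then have "a i \<in> D2" unfolding a_def using coh_scale[OF D2] F2 i by blast
      moreover have "EB1 i \<noteq> {}" using F2 i e1 by auto
      ultimately show "a i \<in> D2 \<and> EB1 i \<noteq> {}" by simp
    qed
    show "\<forall>j\<in>J. b j \<in> D1 \<and> EB2 j \<noteq> {}"
    proof
      fix j assume j: "j \<in> J"
      have "lam j > 0" using h j unfolding J_def by auto
      then have "b j \<in> D1" unfolding b_def using coh_scale[OF D1] F1 j by blast
      moreover have "EB2 j \<noteq> {}" using F1 j e2 by auto
      ultimately show "b j \<in> D1 \<and> EB2 j \<noteq> {}" by simp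
    qed
    show "\<forall>x1 x2. (\<Sum>i\<in>I. a i x2 * indicator (EB1 i) x1) + (\<Sum>j\<in>J. b j x1 * indicator (EB2 j) x2) \<le> 0"
    proof (intro allI)
      fix x1 x2
      show "(\<Sum>i\<in>I. a i x2 * indicator (EB1 i) x1) + (\<Sum>j\<in>J. b j x1 * indicator (EB2 j) x2) \<le> 0"
        using dsplit[of x1 x2] spec[OF dle, of "(x1,x2)"] hnn[of "(x1,x2)"] by linarith
    qed
  qed
  then have KK: "K = {..<n}" using un by auto
  have "0 \<in> K" using KK n by auto
  then have f0: "fs 0 \<in> gambles_pos" "0 < lam 0" using Kpos by auto
  then have "fs 0 \<noteq> (\<lambda>x. 0)" unfolding gambles_pos_def by blast
  then obtain p where p: "fs 0 p \<noteq> 0" by (auto simp: fun_eq_iff)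
  have "0 \<le> fs 0 p" using Kp2 \<open>0 \<in> K\<close> by blast
  then have "0 < fs 0 p" using p by simp
  have "lam 0 * fs 0 p \<le> (\<Sum>k\<in>K. lam k * fs k p)"
  proof (rule member_le_sum[OF \<open>0 \<in> K\<close> _ fK])
    fix k assume "k \<in> K - {0}"
    then show "0 \<le> lam k * fs k p" using Kpos Kp2 by (meson DiffD1 less_imp_le mult_nonneg_nonneg)
  qed
  moreover have "d p = (\<Sum>k\<in>K. lam k * fs k p)" unfolding deq KK by simp
  moreover have "0 < lam 0 * fs 0 p" using f0 \<open>0 < fs 0 p\<close> by simp
  ultimately show False using dle by (metis less_le_trans not_le)
qed

lemma neg_ext_coherent:
  fixes D :: "('a \<Rightarrow> real) set"
  assumes D: "coherent_D D" and g: "gamble g" and gn: "g \<notin> D" and g0: "g \<noteq> (\<lambda>x. 0)"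
  shows "coherent_D (natext (D \<union> {\<lambda>x. - g x}))"
proof (rule coherent_natext)
  show "D \<union> {\<lambda>x. - g x} \<subseteq> gambles"
    using D g gamble_scale[OF g, of "-1"] coh_gamble unfolding gambles_def by auto
next
  fix d assume d: "d \<in> natext (D \<union> {\<lambda>x. - g x})" and dle: "\<forall>x. d x \<le> 0"
  have Q: "(\<exists>c>0. d = (\<lambda>x. c * (- g x))) \<or> (\<exists>c\<ge>0. \<exists>e\<in>D. d = (\<lambda>x. c * (- g x) + e x))"
    using d
  proof (rule natext_induct)
    fix f :: "'a \<Rightarrow> real" assume "f \<in> D \<union> {\<lambda>x. - g x}"
    then show "(\<exists>c>0. f = (\<lambda>x. c * (- g x))) \<or> (\<exists>c\<ge>0. \<exists>e\<in>D. f = (\<lambda>x. c * (- g x) + e x))"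
    proof
      assume "f \<in> D" then show ?thesis by (intro disjI2 exI[of _ 0]) auto
    next
      assume "f \<in> {\<lambda>x. - g x}" then show ?thesis by (intro disjI1 exI[of _ 1]) auto
    qed
  next
    fix f :: "'a \<Rightarrow> real" assume "f \<in> gambles_pos"
    then have "f \<in> D" using coh_pos[OF D] unfolding gambles_pos_def by blast
    then show "(\<exists>c>0. f = (\<lambda>x. c * (- g x))) \<or> (\<exists>c\<ge>0. \<exists>e\<in>D. f = (\<lambda>x. c * (- g x) + e x))"
      by (intro disjI2 exI[of _ 0]) auto
  next
    fix f :: "'a \<Rightarrow> real" and lam :: real
    assume "(\<exists>c>0. f = (\<lambda>x. c * (- g x))) \<or> (\<exists>c\<ge>0. \<exists>e\<in>D. f = (\<lambda>x. c * (- g x) + e x))" "0 < lam"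
    then show "(\<exists>c>0. (\<lambda>x. lam * f x) = (\<lambda>x. c * (- g x))) \<or> (\<exists>c\<ge>0. \<exists>e\<in>D. (\<lambda>x. lam * f x) = (\<lambda>x. c * (- g x) + e x))"
    proof (elim disjE exE conjE bexE)
      fix c assume "0 < c" "f = (\<lambda>x. c * (- g x))"
      then show ?thesis using \<open>0 < lam\<close> by (intro disjI1 exI[of _ "lam * c"]) auto
    next
      fix c e assume "0 \<le> c" "e \<in> D" "f = (\<lambda>x. c * (- g x) + e x)"
      then show ?thesis using \<open>0 < lam\<close> coh_scale[OF D \<open>e \<in> D\<close> \<open>0 < lam\<close>]
        by (intro disjI2 exI[of _ "lam * c"] conjI bexI[of _ "\<lambda>x. lam * e x"]) (auto simp: algebra_simps)
    qed
  next
    fix f h :: "'a \<Rightarrow> real"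
    assume "(\<exists>c>0. f = (\<lambda>x. c * (- g x))) \<or> (\<exists>c\<ge>0. \<exists>e\<in>D. f = (\<lambda>x. c * (- g x) + e x))"
      "(\<exists>c>0. h = (\<lambda>x. c * (- g x))) \<or> (\<exists>c\<ge>0. \<exists>e\<in>D. h = (\<lambda>x. c * (- g x) + e x))"
    then show "(\<exists>c>0. (\<lambda>x. f x + h x) = (\<lambda>x. c * (- g x))) \<or> (\<exists>c\<ge>0. \<exists>e\<in>D. (\<lambda>x. f x + h x) = (\<lambda>x. c * (- g x) + e x))"
    proof (elim disjE exE conjE bexE)
      fix c c' assume "0 < c" "f = (\<lambda>x. c * (- g x))" "0 < c'" "h = (\<lambda>x. c' * (- g x))"
      then show ?thesis by (intro disjI1 exI[of _ "c + c'"]) (auto simp: algebra_simps)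
    next
      fix c c' e assume "0 < c" "f = (\<lambda>x. c * (- g x))" "0 \<le> c'" "e \<in> D" "h = (\<lambda>x. c' * (- g x) + e x)"
      then show ?thesis by (intro disjI2 exI[of _ "c + c'"] conjI bexI[of _ e]) (auto simp: algebra_simps)
    next
      fix c c' e assume "0 \<le> c" "e \<in> D" "f = (\<lambda>x. c * (- g x) + e x)" "0 < c'" "h = (\<lambda>x. c' * (- g x))"
      then show ?thesis by (intro disjI2 exI[of _ "c + c'"] conjI bexI[of _ e]) (auto simp: algebra_simps)
    next
      fix c c' e e' assume "0 \<le> c" "e \<in> D" "f = (\<lambda>x. c * (- g x) + e x)" "0 \<le> c'" "e' \<in> D" "h = (\<lambda>x. c' * (- g x) + e' x)"
      then show ?thesis using coh_add[OF D \<open>e \<in> D\<close> \<open>e' \<in> D\<close>]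
        by (intro disjI2 exI[of _ "c + c'"] conjI bexI[of _ "\<lambda>x. e x + e' x"]) (auto simp: algebra_simps)
    qed
  qed
  show False
    using Q
  proof (elim disjE exE conjE bexE)
    fix c assume c: "0 < c" "d = (\<lambda>x. c * (- g x))"
    have "\<forall>x. 0 \<le> g x"
    proof
      fix x have "c * (- g x) \<le> 0" using dle c by auto
      then have "0 \<le> c * g x" by simp
      then show "0 \<le> g x" using c by (simp add: zero_le_mult_iff)
    qed
    then have "g \<in> D" using coh_pos[OF D g _ g0] by blast
    then show False using gn by simp
  next
    fix c e assume c: "0 \<le> c" "e \<in> D" "d = (\<lambda>x. c * (- g x) + e x)"
    show False
    proof (cases "c = 0")
      case True
      then have "d = e" using c by auto
      then show False using coh_nonpos[OF D dle] c by simp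
    next
      case False
      then have cp: "0 < c" using c by simp
      have "(1/c) > 0" using cp by simp
      then have "(\<lambda>x. (1/c) * e x) \<in> D" using coh_scale[OF D c(2)] by blast
      moreover have "\<forall>x. (1/c) * e x \<le> g x"
      proof
        fix x have "e x \<le> c * g x" using dle c by (auto simp: algebra_simps)
        then show "(1/c) * e x \<le> g x" using cp by (simp add: field_simps)
      qed
      ultimately have "g \<in> D" using coh_up[OF D _ g] by blast
      then show False using gn by simp
    qed
  qed
qed



lemma Dprod_mono1: "D1 \<subseteq> D1' \<Longrightarrow> D_prod BB1 BB2 D1 D2 \<subseteq> D_prod BB1 BB2 D1' D2"
  unfolding D_prod_def by (rule natext_mono) blast

lemma Dprod_mono2: "D2 \<subseteq> D2' \<Longrightarrow> D_prod BB1 BB2 D1 D2 \<subseteq> D_prod BB1 BB2 D1 D2'"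
  unfolding D_prod_def by (rule natext_mono) blast

lemma Dprod_gen1: "f1 \<in> D1 \<Longrightarrow> B2 \<in> BB2 \<union> {UNIV} \<Longrightarrow> (\<lambda>p. f1 (fst p) * indicator B2 (snd p)) \<in> D_prod BB1 BB2 D1 D2"
  unfolding D_prod_def by (rule natext_G) blast

lemma Dprod_gen2: "f2 \<in> D2 \<Longrightarrow> B1 \<in> BB1 \<union> {UNIV} \<Longrightarrow> (\<lambda>p. f2 (snd p) * indicator B1 (fst p)) \<in> D_prod BB1 BB2 D1 D2"
  unfolding D_prod_def by (rule natext_G) blast

lemma marg1:
  fixes BB1 :: "'a set set" and BB2 :: "'b set set" and g :: "'a \<Rightarrow> real"
  assumes D1: "coherent_D D1" and D2: "coherent_D D2" and e1: "{} \<notin> BB1" and e2: "{} \<notin> BB2"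
    and B: "B \<in> BB2 \<union> {UNIV}" and gin: "(\<lambda>p. g (fst p) * indicator B (snd p)) \<in> D_prod BB1 BB2 D1 D2"
  shows "g \<in> D1"
proof (rule ccontr)
  assume gn: "g \<notin> D1"
  have coh: "coherent_D (D_prod BB1 BB2 D1 D2)" by (rule Dprod_coherent[OF D1 D2 e1 e2])
  have "gamble (\<lambda>p. g (fst p) * indicator B (snd p))" using coh_gamble[OF coh gin] .
  then obtain M where M: "\<And>p. \<bar>g (fst p) * indicator B (snd p)\<bar> \<le> M" unfolding gamble_def by blast
  have "B \<noteq> {}" using B e2 by auto
  then obtain y where y: "y \<in> B" by blast
  have gam: "gamble g"
  proof (rule gambleI[of _ M])
    fix x show "\<bar>g x\<bar> \<le> M" using M[of "(x,y)"] y by simp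
  qed
  have g0: "g \<noteq> (\<lambda>x. 0)"
  proof
    assume g0: "g = (\<lambda>x. 0)"
    have "(\<lambda>p. g (fst p) * indicator B (snd p)) \<notin> D_prod BB1 BB2 D1 D2"
      by (rule coh_nonpos[OF coh]) (simp add: g0)
    then show False using gin by simp
  qed
  define D1' where "D1' = natext (D1 \<union> {\<lambda>x. - g x})"
  have coh1: "coherent_D D1'" unfolding D1'_def by (rule neg_ext_coherent[OF D1 gam gn g0])
  have sub: "D1 \<subseteq> D1'" unfolding D1'_def using natext_G by blast
  have neg: "(\<lambda>x. - g x) \<in> D1'" unfolding D1'_def by (rule natext_G) blast
  have coh': "coherent_D (D_prod BB1 BB2 D1' D2)" by (rule Dprod_coherent[OF coh1 D2 e1 e2])
  have i1: "(\<lambda>p. g (fst p) * indicator B (snd p)) \<in> D_prod BB1 BB2 D1' D2"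
    using Dprod_mono1[OF sub] gin by blast
  have i2: "(\<lambda>p. (\<lambda>x. - g x) (fst p) * indicator B (snd p)) \<in> D_prod BB1 BB2 D1' D2"
    by (rule Dprod_gen1[OF neg B])
  have S: "(\<lambda>p. g (fst p) * indicator B (snd p) + (\<lambda>x. - g x) (fst p) * indicator B (snd p)) \<in> D_prod BB1 BB2 D1' D2"
    by (rule coh_add[OF coh' i1 i2])
  have "(\<lambda>p. g (fst p) * indicator B (snd p) + (\<lambda>x. - g x) (fst p) * indicator B (snd p)) \<notin> D_prod BB1 BB2 D1' D2"
    by (rule coh_nonpos[OF coh']) simp
  then show False using S by simp
qed

lemma marg2:
  fixes BB1 :: "'a set set" and BB2 :: "'b set set" and g :: "'b \<Rightarrow> real"
  assumes D1: "coherent_D D1" and D2: "coherent_D D2" and e1: "{} \<notin> BB1" and e2: "{} \<notin> BB2"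
    and B: "B \<in> BB1 \<union> {UNIV}" and gin: "(\<lambda>p. g (snd p) * indicator B (fst p)) \<in> D_prod BB1 BB2 D1 D2"
  shows "g \<in> D2"
proof (rule ccontr)
  assume gn: "g \<notin> D2"
  have coh: "coherent_D (D_prod BB1 BB2 D1 D2)" by (rule Dprod_coherent[OF D1 D2 e1 e2])
  have "gamble (\<lambda>p. g (snd p) * indicator B (fst p))" using coh_gamble[OF coh gin] .
  then obtain M where M: "\<And>p. \<bar>g (snd p) * indicator B (fst p)\<bar> \<le> M" unfolding gamble_def by blast
  have "B \<noteq> {}" using B e1 by auto
  then obtain y where y: "y \<in> B" by blast
  have gam: "gamble g"
  proof (rule gambleI[of _ M])
    fix x show "\<bar>g x\<bar> \<le> M" using M[of "(y,x)"] y by simp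
  qed
  have g0: "g \<noteq> (\<lambda>x. 0)"
  proof
    assume g0: "g = (\<lambda>x. 0)"
    have "(\<lambda>p. g (snd p) * indicator B (fst p)) \<notin> D_prod BB1 BB2 D1 D2"
      by (rule coh_nonpos[OF coh]) (simp add: g0)
    then show False using gin by simp
  qed
  define D2' where "D2' = natext (D2 \<union> {\<lambda>x. - g x})"
  have coh2: "coherent_D D2'" unfolding D2'_def by (rule neg_ext_coherent[OF D2 gam gn g0])
  have sub: "D2 \<subseteq> D2'" unfolding D2'_def using natext_G by blast
  have neg: "(\<lambda>x. - g x) \<in> D2'" unfolding D2'_def by (rule natext_G) blast
  have coh': "coherent_D (D_prod BB1 BB2 D1 D2')" by (rule Dprod_coherent[OF D1 coh2 e1 e2])
  have i1: "(\<lambda>p. g (snd p) * indicator B (fst p)) \<in> D_prod BB1 BB2 D1 D2'"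
    using Dprod_mono2[OF sub] gin by blast
  have i2: "(\<lambda>p. (\<lambda>x. - g x) (snd p) * indicator B (fst p)) \<in> D_prod BB1 BB2 D1 D2'"
    by (rule Dprod_gen2[OF neg B])
  have S: "(\<lambda>p. g (snd p) * indicator B (fst p) + (\<lambda>x. - g x) (snd p) * indicator B (fst p)) \<in> D_prod BB1 BB2 D1 D2'"
    by (rule coh_add[OF coh' i1 i2])
  have "(\<lambda>p. g (snd p) * indicator B (fst p) + (\<lambda>x. - g x) (snd p) * indicator B (fst p)) \<notin> D_prod BB1 BB2 D1 D2'"
    by (rule coh_nonpos[OF coh']) simp
  then show False using S by simp
qed

lemma lp_Dprod1:
  fixes BB1 :: "'a set set" and BB2 :: "'b set set"
  assumes D1: "coherent_D D1" and D2: "coherent_D D2" and e1: "{} \<notin> BB1" and e2: "{} \<notin> BB2"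
    and B: "B \<in> BB2 \<union> {UNIV}"
  shows "lowprev_D (D_prod BB1 BB2 D1 D2) (cyl1 f1) (B1 \<times> B) = lowprev_D D1 f1 B1"
proof -
  have "(\<lambda>x. (cyl1 f1 x - mu) * indicator (B1 \<times> B) x) \<in> D_prod BB1 BB2 D1 D2 \<longleftrightarrow>
        (\<lambda>x. (f1 x - mu) * indicator B1 x) \<in> D1" for mu
  proof -
    have feq: "(\<lambda>x. (cyl1 f1 x - mu) * indicator (B1 \<times> B) x) = (\<lambda>p. (\<lambda>x. (f1 x - mu) * indicator B1 x) (fst p) * indicator B (snd p))"
      by (rule ext) (simp add: cyl1_def indicator_times mult_ac)
    show ?thesis unfolding feq
    proof
      assume "(\<lambda>p. (\<lambda>x. (f1 x - mu) * indicator B1 x) (fst p) * indicator B (snd p)) \<in> D_prod BB1 BB2 D1 D2"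
      from marg1[OF D1 D2 e1 e2 B this] show "(\<lambda>x. (f1 x - mu) * indicator B1 x) \<in> D1" .
    next
      assume "(\<lambda>x. (f1 x - mu) * indicator B1 x) \<in> D1"
      from Dprod_gen1[OF this B] show "(\<lambda>p. (\<lambda>x. (f1 x - mu) * indicator B1 x) (fst p) * indicator B (snd p)) \<in> D_prod BB1 BB2 D1 D2" .
    qed
  qed
  then show ?thesis unfolding lowprev_D_def by simp
qed

lemma lp_Dprod2:
  fixes BB1 :: "'a set set" and BB2 :: "'b set set"
  assumes D1: "coherent_D D1" and D2: "coherent_D D2" and e1: "{} \<notin> BB1" and e2: "{} \<notin> BB2"
    and B: "B \<in> BB1 \<union> {UNIV}"
  shows "lowprev_D (D_prod BB1 BB2 D1 D2) (cyl2 f2) (B \<times> B2) = lowprev_D D2 f2 B2"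
proof -
  have "(\<lambda>x. (cyl2 f2 x - mu) * indicator (B \<times> B2) x) \<in> D_prod BB1 BB2 D1 D2 \<longleftrightarrow>
        (\<lambda>x. (f2 x - mu) * indicator B2 x) \<in> D2" for mu
  proof -
    have feq: "(\<lambda>x. (cyl2 f2 x - mu) * indicator (B \<times> B2) x) = (\<lambda>p. (\<lambda>x. (f2 x - mu) * indicator B2 x) (snd p) * indicator B (fst p))"
      by (rule ext) (simp add: cyl2_def indicator_times mult_ac)
    show ?thesis unfolding feq
    proof
      assume "(\<lambda>p. (\<lambda>x. (f2 x - mu) * indicator B2 x) (snd p) * indicator B (fst p)) \<in> D_prod BB1 BB2 D1 D2"
      from marg2[OF D1 D2 e1 e2 B this] show "(\<lambda>x. (f2 x - mu) * indicator B2 x) \<in> D2" .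
    next
      assume "(\<lambda>x. (f2 x - mu) * indicator B2 x) \<in> D2"
      from Dprod_gen2[OF this B] show "(\<lambda>p. (\<lambda>x. (f2 x - mu) * indicator B2 x) (snd p) * indicator B (fst p)) \<in> D_prod BB1 BB2 D1 D2" .
    qed
  qed
  then show ?thesis unfolding lowprev_D_def by simp
qed

lemma lowprev_mono: "D \<subseteq> D' \<Longrightarrow> lowprev_D D f B \<le> lowprev_D D' f B"
  unfolding lowprev_D_def by (rule Sup_subset_mono) blast

lemma gamble_shift_ind: "gamble f \<Longrightarrow> gamble (\<lambda>x. (f x - mu) * indicator B x)"
proof -
  assume "gamble f"
  then have "gamble (\<lambda>x. f x + (-mu))" using gamble_add gamble_const by blast
  then show ?thesis using gamble_ind by simp
qed

lemma cond_pairs_gamble: "(f, B) \<in> cond_pairs \<Longrightarrow> gamble f"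
  unfolding cond_pairs_def gambles_def by auto

lemma cond_pairs_ne: "(f, B) \<in> cond_pairs \<Longrightarrow> B \<noteq> {}"
  unfolding cond_pairs_def by auto

lemma E_lp_props:
  assumes P: "coherent_lp C1 P1"
  shows "coherent_D (E_lp C1 P1)" "\<forall>(f,B)\<in>C1. lowprev_D (E_lp C1 P1) f B = P1 f B"
proof -
  from P obtain D where C1: "C1 \<subseteq> cond_pairs" and D: "coherent_D D" and PD: "\<forall>(f, B)\<in>C1. P1 f B = lowprev_D D f B"
    unfolding coherent_lp_def by blast
  have AD: "A_lp C1 P1 \<subseteq> D"
  proof
    fix g assume "g \<in> A_lp C1 P1"
    then obtain f B mu where fB: "(f, B) \<in> C1" and mu: "ereal mu < P1 f B" and g: "g = (\<lambda>x. (f x - mu) * indicator B x)"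
      unfolding A_lp_def by blast
    have "ereal mu < lowprev_D D f B" using PD fB mu by auto
    then obtain mu' where mu': "mu < mu'" "(\<lambda>x. (f x - mu') * indicator B x) \<in> D"
      unfolding lowprev_D_def less_Sup_iff by auto
    have gf: "gamble f" using C1 fB cond_pairs_gamble by blast
    show "g \<in> D" unfolding g
      by (rule coh_up[OF D mu'(2) gamble_shift_ind[OF gf]]) (use mu'(1) in \<open>auto simp: indicator_def\<close>)
  qed
  have ED: "E_lp C1 P1 \<subseteq> D" unfolding E_lp_def by (rule natext_sub[OF D AD])
  show coh: "coherent_D (E_lp C1 P1)" unfolding E_lp_def
  proof (rule coherent_natext)
    show "A_lp C1 P1 \<subseteq> gambles"
      using AD D coh_gamble unfolding gambles_def by blast
  next
    fix d assume "d \<in> natext (A_lp C1 P1)" "\<forall>x. d x \<le> 0"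
    then show False using ED coh_nonpos[OF D] unfolding E_lp_def by blast
  qed
  show "\<forall>(f,B)\<in>C1. lowprev_D (E_lp C1 P1) f B = P1 f B"
  proof (intro ballI, clarify)
    fix f B assume fB: "(f, B) \<in> C1"
    have le: "lowprev_D (E_lp C1 P1) f B \<le> P1 f B" using lowprev_mono[OF ED] PD fB by auto
    have ge: "P1 f B \<le> lowprev_D (E_lp C1 P1) f B"
    proof (rule dense_le)
      fix y assume y: "y < P1 f B"
      show "y \<le> lowprev_D (E_lp C1 P1) f B"
      proof (cases y)
        case (real mu)
        then have "(\<lambda>x. (f x - mu) * indicator B x) \<in> A_lp C1 P1"
          unfolding A_lp_def using fB y by blast
        then have "(\<lambda>x. (f x - mu) * indicator B x) \<in> E_lp C1 P1"
          unfolding E_lp_def by (rule natext_G)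
        then show ?thesis unfolding lowprev_D_def real by (intro Sup_upper) blast
      next
        case PInf then show ?thesis using y by simp
      next
        case MInf then show ?thesis by simp
      qed
    qed
    show "lowprev_D (E_lp C1 P1) f B = P1 f B" using le ge by simp
  qed
qed



lemma minimal_aux2:
  fixes BB1 :: "'a set set" and BB2 :: "'b set set" and C :: "(('a \<times> 'b \<Rightarrow> real) \<times> ('a \<times> 'b) set) set"
  assumes e1: "{} \<notin> BB1" and P2: "coherent_lp C2 P2"
    and dom: "indep_domain BB1 BB2 C"
    and h8: "\<forall>(f2, B2) \<in> C2. (cyl2 f2, UNIV \<times> B2) \<in> C"
    and D': "coherent_D D'" and QD: "\<forall>(f, B)\<in>C. Q f B = lowprev_D D' f B"
    and epi: "\<forall>(f2, B2) \<in> cond_pairs. (cyl2 f2, UNIV \<times> B2) \<in> C \<longrightarrow>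
        (\<forall>B1 \<in> BB1. Q (cyl2 f2) (UNIV \<times> B2) = Q (cyl2 f2) (B1 \<times> B2))"
    and agr: "\<forall>(f2, B2) \<in> C2. Q (cyl2 f2) (UNIV \<times> B2) = P2 f2 B2"
    and f2: "f2 \<in> E_lp C2 P2" and B1: "B1 \<in> BB1 \<union> {UNIV}"
  shows "(\<lambda>p. f2 (snd p) * indicator B1 (fst p)) \<in> D'"
proof -
  have C2: "C2 \<subseteq> cond_pairs" using P2 unfolding coherent_lp_def by blast
  have B1ne: "B1 \<noteq> {}" using B1 e1 by auto
  from f2 show ?thesis unfolding E_lp_def
  proof (rule natext_induct)
    fix g assume "g \<in> A_lp C2 P2"
    then obtain f B mu where fB: "(f, B) \<in> C2" and mu: "ereal mu < P2 f B" and g: "g = (\<lambda>x. (f x - mu) * indicator B x)"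
      unfolding A_lp_def by blast
    have cp: "(f, B) \<in> cond_pairs" using C2 fB by blast
    have inC: "(cyl2 f, UNIV \<times> B) \<in> C" using h8 fB by blast
    have "(cyl2 f, B1 \<times> B) \<in> C \<and> Q (cyl2 f) (B1 \<times> B) = Q (cyl2 f) (UNIV \<times> B)"
    proof (cases "B1 = UNIV")
      case True then show ?thesis using inC by simp
    next
      case False
      then have "B1 \<in> BB1" using B1 by simp
      have d2: "\<forall>(f2, B2) \<in> cond_pairs. \<forall>B1 \<in> BB1.
        (cyl2 f2, UNIV \<times> B2) \<in> C \<longleftrightarrow> (cyl2 f2, B1 \<times> B2) \<in> C"
        using dom unfolding indep_domain_def by blast
      have "\<forall>B1 \<in> BB1. (cyl2 f, UNIV \<times> B) \<in> C \<longleftrightarrow> (cyl2 f, B1 \<times> B) \<in> C"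
        using bspec[OF d2 cp] by simp
      then have m: "(cyl2 f, B1 \<times> B) \<in> C" using \<open>B1 \<in> BB1\<close> inC by blast
      have "(cyl2 f, UNIV \<times> B) \<in> C \<longrightarrow> (\<forall>B1 \<in> BB1. Q (cyl2 f) (UNIV \<times> B) = Q (cyl2 f) (B1 \<times> B))"
        using bspec[OF epi cp] by simp
      then have "Q (cyl2 f) (UNIV \<times> B) = Q (cyl2 f) (B1 \<times> B)" using \<open>B1 \<in> BB1\<close> inC by blast
      then show ?thesis using m by simp
    qed
    then have inC1: "(cyl2 f, B1 \<times> B) \<in> C" and Qeq: "Q (cyl2 f) (B1 \<times> B) = P2 f B" using agr fB by auto
    have "ereal mu < lowprev_D D' (cyl2 f) (B1 \<times> B)" using QD inC1 Qeq mu by auto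
    then obtain mu' where mu': "mu < mu'" "(\<lambda>x. (cyl2 f x - mu') * indicator (B1 \<times> B) x) \<in> D'"
      unfolding lowprev_D_def less_Sup_iff by auto
    have gf: "gamble f" using cp cond_pairs_gamble by blast
    have gam: "gamble (\<lambda>p. g (snd p) * indicator B1 (fst p))"
      unfolding g by (rule gamble_ind_comp[OF gamble_comp[OF gamble_shift_ind[OF gf]]])
    show "(\<lambda>p. g (snd p) * indicator B1 (fst p)) \<in> D'"
    proof (rule coh_up[OF D' mu'(2) gam], intro allI)
      fix p :: "'a \<times> 'b"
      obtain a b where p: "p = (a, b)" by (cases p)
      show "(cyl2 f p - mu') * indicator (B1 \<times> B) p \<le> g (snd p) * indicator B1 (fst p)"
        unfolding p g cyl2_def using mu'(1) by (cases "a \<in> B1"; cases "b \<in> B") (simp_all add: indicator_def)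
    qed
  next
    fix g :: "'b \<Rightarrow> real" assume gp: "g \<in> gambles_pos"
    then have gg: "gamble g" "\<forall>x. 0 \<le> g x" "g \<noteq> (\<lambda>x. 0)" unfolding gambles_pos_def by auto
    then obtain y where y: "g y \<noteq> 0" by (auto simp: fun_eq_iff)
    obtain x where x: "x \<in> B1" using B1ne by blast
    have "(\<lambda>p. g (snd p) * indicator B1 (fst p)) \<noteq> (\<lambda>p. 0)"
    proof
      assume "(\<lambda>p. g (snd p) * indicator B1 (fst p)) = (\<lambda>p. 0)"
      then have "g (snd (x,y)) * indicator B1 (fst (x,y)) = 0" by (rule fun_cong)
      then show False using x y by simp
    qed
    moreover have "gamble (\<lambda>p. g (snd p) * indicator B1 (fst p))"
      by (rule gamble_ind_comp[OF gamble_comp[OF gg(1)]])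
    moreover have "\<forall>p. 0 \<le> g (snd p) * indicator B1 (fst p)" using gg(2) by simp
    ultimately show "(\<lambda>p. g (snd p) * indicator B1 (fst p)) \<in> D'"
      using coh_pos[OF D'] by blast
  next
    fix g :: "'b \<Rightarrow> real" and lam :: real
    assume "(\<lambda>p. g (snd p) * indicator B1 (fst p)) \<in> D'" "0 < lam"
    from coh_scale[OF D' this] show "(\<lambda>p. (\<lambda>x. lam * g x) (snd p) * indicator B1 (fst p)) \<in> D'"
      by (simp add: mult.assoc)
  next
    fix g h :: "'b \<Rightarrow> real"
    assume "(\<lambda>p. g (snd p) * indicator B1 (fst p)) \<in> D'" "(\<lambda>p. h (snd p) * indicator B1 (fst p)) \<in> D'"
    from coh_add[OF D' this] show "(\<lambda>p. (\<lambda>x. g x + h x) (snd p) * indicator B1 (fst p)) \<in> D'"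
      by (simp add: distrib_right)
  qed
qed

lemma minimal_aux1:
  fixes BB1 :: "'a set set" and BB2 :: "'b set set" and C :: "(('a \<times> 'b \<Rightarrow> real) \<times> ('a \<times> 'b) set) set"
  assumes e2: "{} \<notin> BB2" and P1: "coherent_lp C1 P1"
    and dom: "indep_domain BB1 BB2 C"
    and h7: "\<forall>(f1, B1) \<in> C1. (cyl1 f1, B1 \<times> UNIV) \<in> C"
    and D': "coherent_D D'" and QD: "\<forall>(f, B)\<in>C. Q f B = lowprev_D D' f B"
    and epi: "\<forall>(f1, B1) \<in> cond_pairs. (cyl1 f1, B1 \<times> UNIV) \<in> C \<longrightarrow>
        (\<forall>B2 \<in> BB2. Q (cyl1 f1) (B1 \<times> UNIV) = Q (cyl1 f1) (B1 \<times> B2))"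
    and agr: "\<forall>(f1, B1) \<in> C1. Q (cyl1 f1) (B1 \<times> UNIV) = P1 f1 B1"
    and f1: "f1 \<in> E_lp C1 P1" and B2: "B2 \<in> BB2 \<union> {UNIV}"
  shows "(\<lambda>p. f1 (fst p) * indicator B2 (snd p)) \<in> D'"
proof -
  have C1: "C1 \<subseteq> cond_pairs" using P1 unfolding coherent_lp_def by blast
  have B2ne: "B2 \<noteq> {}" using B2 e2 by auto
  from f1 show ?thesis unfolding E_lp_def
  proof (rule natext_induct)
    fix g assume "g \<in> A_lp C1 P1"
    then obtain f B mu where fB: "(f, B) \<in> C1" and mu: "ereal mu < P1 f B" and g: "g = (\<lambda>x. (f x - mu) * indicator B x)"
      unfolding A_lp_def by blast
    have cp: "(f, B) \<in> cond_pairs" using C1 fB by blast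
    have inC: "(cyl1 f, B \<times> UNIV) \<in> C" using h7 fB by blast
    have "(cyl1 f, B \<times> B2) \<in> C \<and> Q (cyl1 f) (B \<times> B2) = Q (cyl1 f) (B \<times> UNIV)"
    proof (cases "B2 = UNIV")
      case True then show ?thesis using inC by simp
    next
      case False
      then have "B2 \<in> BB2" using B2 by simp
      have d1: "\<forall>(f1, B1) \<in> cond_pairs. \<forall>B2 \<in> BB2.
        (cyl1 f1, B1 \<times> UNIV) \<in> C \<longleftrightarrow> (cyl1 f1, B1 \<times> B2) \<in> C"
        using dom unfolding indep_domain_def by blast
      have "\<forall>B2 \<in> BB2. (cyl1 f, B \<times> UNIV) \<in> C \<longleftrightarrow> (cyl1 f, B \<times> B2) \<in> C"
        using bspec[OF d1 cp] by simp
      then have m: "(cyl1 f, B \<times> B2) \<in> C" using \<open>B2 \<in> BB2\<close> inC by blast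
      have "(cyl1 f, B \<times> UNIV) \<in> C \<longrightarrow> (\<forall>B2 \<in> BB2. Q (cyl1 f) (B \<times> UNIV) = Q (cyl1 f) (B \<times> B2))"
        using bspec[OF epi cp] by simp
      then have "Q (cyl1 f) (B \<times> UNIV) = Q (cyl1 f) (B \<times> B2)" using \<open>B2 \<in> BB2\<close> inC by blast
      then show ?thesis using m by simp
    qed
    then have inC1: "(cyl1 f, B \<times> B2) \<in> C" and Qeq: "Q (cyl1 f) (B \<times> B2) = P1 f B" using agr fB by auto
    have "ereal mu < lowprev_D D' (cyl1 f) (B \<times> B2)" using QD inC1 Qeq mu by auto
    then obtain mu' where mu': "mu < mu'" "(\<lambda>x. (cyl1 f x - mu') * indicator (B \<times> B2) x) \<in> D'"
      unfolding lowprev_D_def less_Sup_iff by auto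
    have gf: "gamble f" using cp cond_pairs_gamble by blast
    have gam: "gamble (\<lambda>p. g (fst p) * indicator B2 (snd p))"
      unfolding g by (rule gamble_ind_comp[OF gamble_comp[OF gamble_shift_ind[OF gf]]])
    show "(\<lambda>p. g (fst p) * indicator B2 (snd p)) \<in> D'"
    proof (rule coh_up[OF D' mu'(2) gam], intro allI)
      fix p :: "'a \<times> 'b"
      obtain a b where p: "p = (a, b)" by (cases p)
      show "(cyl1 f p - mu') * indicator (B \<times> B2) p \<le> g (fst p) * indicator B2 (snd p)"
        unfolding p g cyl1_def using mu'(1) by (cases "a \<in> B"; cases "b \<in> B2") (simp_all add: indicator_def)
    qed
  next
    fix g :: "'a \<Rightarrow> real" assume gp: "g \<in> gambles_pos"
    then have gg: "gamble g" "\<forall>x. 0 \<le> g x" "g \<noteq> (\<lambda>x. 0)" unfolding gambles_pos_def by auto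
    then obtain y where y: "g y \<noteq> 0" by (auto simp: fun_eq_iff)
    obtain x where x: "x \<in> B2" using B2ne by blast
    have "(\<lambda>p. g (fst p) * indicator B2 (snd p)) \<noteq> (\<lambda>p. 0)"
    proof
      assume "(\<lambda>p. g (fst p) * indicator B2 (snd p)) = (\<lambda>p. 0)"
      then have "g (fst (y,x)) * indicator B2 (snd (y,x)) = 0" by (rule fun_cong)
      then show False using x y by simp
    qed
    moreover have "gamble (\<lambda>p. g (fst p) * indicator B2 (snd p))"
      by (rule gamble_ind_comp[OF gamble_comp[OF gg(1)]])
    moreover have "\<forall>p. 0 \<le> g (fst p) * indicator B2 (snd p)" using gg(2) by simp
    ultimately show "(\<lambda>p. g (fst p) * indicator B2 (snd p)) \<in> D'"
      using coh_pos[OF D'] by blast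
  next
    fix g :: "'a \<Rightarrow> real" and lam :: real
    assume "(\<lambda>p. g (fst p) * indicator B2 (snd p)) \<in> D'" "0 < lam"
    from coh_scale[OF D' this] show "(\<lambda>p. (\<lambda>x. lam * g x) (fst p) * indicator B2 (snd p)) \<in> D'"
      by (simp add: mult.assoc)
  next
    fix g h :: "'a \<Rightarrow> real"
    assume "(\<lambda>p. g (fst p) * indicator B2 (snd p)) \<in> D'" "(\<lambda>p. h (fst p) * indicator B2 (snd p)) \<in> D'"
    from coh_add[OF D' this] show "(\<lambda>p. (\<lambda>x. g x + h x) (fst p) * indicator B2 (snd p)) \<in> D'"
      by (simp add: distrib_right)
  qed
qed



theorem theorem19:
  fixes BB1 :: "'a set set" and BB2 :: "'b set set"
    and C1 :: "(('a \<Rightarrow> real) \<times> 'a set) set" and P1 :: "('a \<Rightarrow> real) \<Rightarrow> 'a set \<Rightarrow> ereal"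
    and C2 :: "(('b \<Rightarrow> real) \<times> 'b set) set" and P2 :: "('b \<Rightarrow> real) \<Rightarrow> 'b set \<Rightarrow> ereal"
    and C :: "(('a \<times> 'b \<Rightarrow> real) \<times> ('a \<times> 'b) set) set"
  assumes "{} \<notin> BB1" and "{} \<notin> BB2"
    and "coherent_lp C1 P1" and "coherent_lp C2 P2"
    and "C \<subseteq> cond_pairs"
    and "indep_domain BB1 BB2 C"
    and "\<forall>(f1, B1) \<in> C1. (cyl1 f1, B1 \<times> UNIV) \<in> C"
    and "\<forall>(f2, B2) \<in> C2. (cyl2 f2, UNIV \<times> B2) \<in> C"
  shows "indep_natext BB1 BB2 C1 P1 C2 P2 C
           (lowprev_D (D_prod BB1 BB2 (E_lp C1 P1) (E_lp C2 P2)))"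
proof -
  note e1 = assms(1) and e2 = assms(2) and P1 = assms(3) and P2 = assms(4) and CC = assms(5)
    and dom = assms(6) and h7 = assms(7) and h8 = assms(8)
  define E1 where "E1 = E_lp C1 P1"
  define E2 where "E2 = E_lp C2 P2"
  define D where "D = D_prod BB1 BB2 E1 E2"
  have cE1: "coherent_D E1" and lE1: "\<forall>(f,B)\<in>C1. lowprev_D E1 f B = P1 f B"
    unfolding E1_def using E_lp_props[OF P1] by auto
  have cE2: "coherent_D E2" and lE2: "\<forall>(f,B)\<in>C2. lowprev_D E2 f B = P2 f B"
    unfolding E2_def using E_lp_props[OF P2] by auto
  have cD: "coherent_D D" unfolding D_def by (rule Dprod_coherent[OF cE1 cE2 e1 e2])
  have L1: "lowprev_D D (cyl1 f1) (B1 \<times> B) = lowprev_D E1 f1 B1" if "B \<in> BB2 \<union> {UNIV}" for f1 B1 B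
    unfolding D_def by (rule lp_Dprod1[OF cE1 cE2 e1 e2 that])
  have L2: "lowprev_D D (cyl2 f2) (B \<times> B2) = lowprev_D E2 f2 B2" if "B \<in> BB1 \<union> {UNIV}" for f2 B2 B
    unfolding D_def by (rule lp_Dprod2[OF cE1 cE2 e1 e2 that])
  have prod: "indep_product BB1 BB2 C1 P1 C2 P2 C (lowprev_D D)"
    unfolding indep_product_def epist_indep_def
  proof (intro conjI)
    show "indep_domain BB1 BB2 C" by (rule dom)
    show "coherent_lp C (lowprev_D D)" unfolding coherent_lp_def using CC cD by blast
    show "\<forall>(f1, B1)\<in>cond_pairs. (cyl1 f1, B1 \<times> UNIV) \<in> C \<longrightarrow>
        (\<forall>B2\<in>BB2. lowprev_D D (cyl1 f1) (B1 \<times> UNIV) = lowprev_D D (cyl1 f1) (B1 \<times> B2))"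
    proof (intro ballI impI, clarify)
      fix f1 B1 B2 assume "B2 \<in> BB2"
      then show "lowprev_D D (cyl1 f1) (B1 \<times> UNIV) = lowprev_D D (cyl1 f1) (B1 \<times> B2)"
        using L1[of UNIV f1 B1] L1[of B2 f1 B1] by simp
    qed
    show "\<forall>(f2, B2)\<in>cond_pairs. (cyl2 f2, UNIV \<times> B2) \<in> C \<longrightarrow>
        (\<forall>B1\<in>BB1. lowprev_D D (cyl2 f2) (UNIV \<times> B2) = lowprev_D D (cyl2 f2) (B1 \<times> B2))"
    proof (intro ballI impI, clarify)
      fix f2 B2 B1 assume "B1 \<in> BB1"
      then show "lowprev_D D (cyl2 f2) (UNIV \<times> B2) = lowprev_D D (cyl2 f2) (B1 \<times> B2)"
        using L2[of UNIV f2 B2] L2[of B1 f2 B2] by simp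
    qed
    show "\<forall>(f1, B1)\<in>C1. lowprev_D D (cyl1 f1) (B1 \<times> UNIV) = P1 f1 B1"
    proof (intro ballI, clarify)
      fix f1 B1 assume "(f1, B1) \<in> C1"
      then show "lowprev_D D (cyl1 f1) (B1 \<times> UNIV) = P1 f1 B1"
        using L1[of UNIV f1 B1] lE1 by auto
    qed
    show "\<forall>(f2, B2)\<in>C2. lowprev_D D (cyl2 f2) (UNIV \<times> B2) = P2 f2 B2"
    proof (intro ballI, clarify)
      fix f2 B2 assume "(f2, B2) \<in> C2"
      then show "lowprev_D D (cyl2 f2) (UNIV \<times> B2) = P2 f2 B2"
        using L2[of UNIV f2 B2] lE2 by auto
    qed
  qed
  have minq: "\<forall>(f, B)\<in>C. lowprev_D D f B \<le> Q f B" if Q: "indep_product BB1 BB2 C1 P1 C2 P2 C Q" for Q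
  proof -
    have epQ: "epist_indep BB1 BB2 C Q" using Q unfolding indep_product_def by blast
    have ag1: "\<forall>(f1, B1) \<in> C1. Q (cyl1 f1) (B1 \<times> UNIV) = P1 f1 B1"
      and ag2: "\<forall>(f2, B2) \<in> C2. Q (cyl2 f2) (UNIV \<times> B2) = P2 f2 B2"
      using Q unfolding indep_product_def by blast+
    have cQ: "coherent_lp C Q"
      and ep1: "\<forall>(f1, B1) \<in> cond_pairs. (cyl1 f1, B1 \<times> UNIV) \<in> C \<longrightarrow>
        (\<forall>B2 \<in> BB2. Q (cyl1 f1) (B1 \<times> UNIV) = Q (cyl1 f1) (B1 \<times> B2))"
      and ep2: "\<forall>(f2, B2) \<in> cond_pairs. (cyl2 f2, UNIV \<times> B2) \<in> C \<longrightarrow>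
        (\<forall>B1 \<in> BB1. Q (cyl2 f2) (UNIV \<times> B2) = Q (cyl2 f2) (B1 \<times> B2))"
      using epQ unfolding epist_indep_def by blast+
    from cQ obtain D' where D': "coherent_D D'" and QD: "\<forall>(f, B)\<in>C. Q f B = lowprev_D D' f B"
      unfolding coherent_lp_def by blast
    have g1: "(\<lambda>p. f1 (fst p) * indicator B2 (snd p)) \<in> D'" if "f1 \<in> E1" "B2 \<in> BB2 \<union> {UNIV}" for f1 B2
      using minimal_aux1[OF e2 P1 dom h7 D' QD ep1 ag1, of f1 B2] that unfolding E1_def by blast
    have g2: "(\<lambda>p. f2 (snd p) * indicator B1 (fst p)) \<in> D'" if "f2 \<in> E2" "B1 \<in> BB1 \<union> {UNIV}" for f2 B1
      using minimal_aux2[OF e1 P2 dom h8 D' QD ep2 ag2, of f2 B1] that unfolding E2_def by blast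
    have "D \<subseteq> D'" unfolding D_def D_prod_def
      by (rule natext_sub[OF D']) (use g1 g2 in blast)
    show ?thesis
    proof (intro ballI, clarify)
      fix f B assume "(f, B) \<in> C"
      then show "lowprev_D D f B \<le> Q f B" using QD lowprev_mono[OF \<open>D \<subseteq> D'\<close>, of f B] by auto
    qed
  qed
  show ?thesis
    unfolding indep_natext_def E1_def[symmetric] E2_def[symmetric] D_def[symmetric]
  proof (intro conjI allI impI)
    show "indep_product BB1 BB2 C1 P1 C2 P2 C (lowprev_D D)" by (rule prod)
    fix Q assume "indep_product BB1 BB2 C1 P1 C2 P2 C Q"
    then show "\<forall>(f, B)\<in>C. lowprev_D D f B \<le> Q f B" by (rule minq)
  qed
qed


end
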